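(* Let $n\ge1$, $S\subseteq\{1,\ldots,n\}$ nonempty, $j\in\{1,\ldots,|S|\}$ and $k\in\{1,\ldots,n\}$. Then $$I(\mathrm{os}_{j:S},k)=\frac{\binom{k-1}{j-1}\binom{n-k}{|S|-j}}{\binom{n}{|S|}}$$ if $0\le k-j\le n-|S|$, and $I(\mathrm{os}_{j:S},k)=0$ otherwise.
   Context: For nonempty $S\subseteq\{1,\ldots,n\}$ and $j\in\{1,\ldots,|S|\}$, $\mathrm{os}_{j:S}\colon[0,1]^n\to\mathbb{R}$ maps $\mathbf{x}$ to the $j$th smallest of the $x_i$, $i\in S$. For $\mathbf{x}\in[0,1]^n$, $x_{(1)}\le\cdots\le x_{(n)}$ are its coordinates in ascending order, with $x_{(0)}=0$, $x_{(n+1)}=1$. The influence index of a square integrable $f$ on $[0,1]^n$ is $I(f,k)=-(n+1)(n+2)\int_{[0,1]^n}f(\mathbf{x})\,\big(x_{(k+1)}-2x_{(k)}+x_{(k-1)}\big)\,d\mathbf{x}$. *)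

theory Defs
  imports "HOL-Probability.Probability"
begin

text \<open>Points of [0,1]^n are functions x :: nat => real on the index set {1..n}.
  os j S x is the j-th smallest (1-based) of the values x i, i in S (with multiplicity).\<close>
definition os :: "nat \<Rightarrow> nat set \<Rightarrow> (nat \<Rightarrow> real) \<Rightarrow> real" where
  "os j S x = sort (map x (sorted_list_of_set S)) ! (j - 1)"

definition ostat :: "nat \<Rightarrow> (nat \<Rightarrow> real) \<Rightarrow> nat \<Rightarrow> real" where
  "ostat n x k = (if k = 0 then 0 else if k = n + 1 then 1 else os k {1..n} x)"

definition cube :: "nat \<Rightarrow> (nat \<Rightarrow> real) measure" where
  "cube n = PiM {1..n} (\<lambda>_. restrict_space lborel {0..1})"

definition influence :: "nat \<Rightarrow> ((nat \<Rightarrow> real) \<Rightarrow> real) \<Rightarrow> nat \<Rightarrow> real" where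
  "influence n f k = - (real (n + 1) * real (n + 2)) *
     (\<integral>x. f x * (ostat n x (k + 1) - 2 * ostat n x k + ostat n x (k - 1)) \<partial>cube n)"

end

theory Submission
  imports Defs "HOL-Combinatorics.Permutations"
begin


lemma sorted_nth_threshold:
  fixes ys :: "real list"
  assumes "sorted ys" "q < length ys"
  shows "(z < ys ! q) \<longleftrightarrow> length (filter (\<lambda>y. y \<le> z) ys) \<le> q"
  using assms
proof (induction ys arbitrary: q)
  case Nil then show ?case by simp
next
  case (Cons y ys)
  have all: "\<forall>w\<in>set ys. y \<le> w" using Cons.prems(1) by simp
  show ?case
  proof (cases q)
    case 0
    show ?thesis
    proof
      assume "z < (y # ys) ! q"
      then have "z < y" using 0 by simp
      then have "filter (\<lambda>w. w \<le> z) (y#ys) = []" using all by (auto simp: filter_empty_conv)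
      then show "length (filter (\<lambda>y. y \<le> z) (y # ys)) \<le> q" by simp
    next
      assume "length (filter (\<lambda>y. y \<le> z) (y # ys)) \<le> q"
      then show "z < (y # ys) ! q" using 0 by (auto split: if_splits)
    qed
  next
    case (Suc q')
    have s: "sorted ys" using Cons.prems(1) by simp
    have ql: "q' < length ys" using Cons.prems(2) Suc by simp
    show ?thesis
    proof (cases "y \<le> z")
      case True
      then show ?thesis using Cons.IH[OF s ql] Suc by simp
    next
      case False
      have "filter (\<lambda>w. w \<le> z) (y#ys) = []" using all False by (auto simp: filter_empty_conv)
      moreover have "z < ys ! q'" using False all ql by (meson linorder_not_le nth_mem order_less_le_trans)
      ultimately show ?thesis using Suc by simp
    qed
  qed
qed

lemma os_threshold:
  assumes "finite T" "1 \<le> j" "j \<le> card T"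
  shows "z < os j T x \<longleftrightarrow> card {i\<in>T. x i \<le> z} < j"
proof -
  define xs where "xs = map x (sorted_list_of_set T)"
  have len: "length (sort xs) = card T" by (simp add: xs_def)
  have "z < os j T x \<longleftrightarrow> length (filter (\<lambda>y. y \<le> z) (sort xs)) \<le> j - 1"
    unfolding os_def xs_def[symmetric]
    by (rule sorted_nth_threshold) (use len assms in auto)
  also have "length (filter (\<lambda>y. y \<le> z) (sort xs)) = length (filter (\<lambda>y. y \<le> z) xs)"
    by (metis mset_filter mset_sort size_mset)
  also have "\<dots> = card {i\<in>T. x i \<le> z}"
    unfolding xs_def filter_map length_map
    by (subst distinct_length_filter) (use assms in \<open>auto intro!: arg_cong[where f=card]\<close>)
  finally show ?thesis using assms by linarith
qed

lemma os_mem: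
  assumes "finite T" "1 \<le> j" "j \<le> card T"
  shows "\<exists>i\<in>T. os j T x = x i"
proof -
  define xs where "xs = map x (sorted_list_of_set T)"
  have len: "length (sort xs) = card T" by (simp add: xs_def)
  have "os j T x \<in> set (sort xs)" unfolding os_def xs_def[symmetric]
    by (rule nth_mem) (use len assms in auto)
  then show ?thesis using assms by (auto simp: xs_def)
qed

lemma os_eqI:
  assumes "finite T" "1 \<le> j" "j \<le> card T"
    and "\<And>z. z < v \<longleftrightarrow> card {i\<in>T. x i \<le> z} < j"
  shows "os j T x = v"
proof -
  have *: "\<And>z. z < os j T x \<longleftrightarrow> z < v" using os_threshold[OF assms(1-3)] assms(4) by simp
  show ?thesis
  proof (rule ccontr)
    assume "os j T x \<noteq> v"
    then consider "os j T x < v" | "v < os j T x" by linarith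
    then show False using *[of "os j T x"] *[of v] by cases auto
  qed
qed

lemma os_unique:
  assumes "finite T" "1 \<le> j" "j \<le> card T" "i \<in> T"
    and "card {l\<in>T. x l < x i} = j - 1"
  shows "os j T x = x i"
proof (rule os_eqI[OF assms(1-3)])
  fix z
  show "z < x i \<longleftrightarrow> card {l\<in>T. x l \<le> z} < j"
  proof
    assume "z < x i"
    then have "{l\<in>T. x l \<le> z} \<subseteq> {l\<in>T. x l < x i}" by auto
    then have "card {l\<in>T. x l \<le> z} \<le> j - 1" using assms(1,5) by (metis (no_types, lifting) card_mono finite_subset mem_Collect_eq subsetI)
    then show "card {l\<in>T. x l \<le> z} < j" using assms(2) by linarith
  next
    assume c: "card {l\<in>T. x l \<le> z} < j"
    show "z < x i"
    proof (rule ccontr)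
      assume "\<not> z < x i"
      then have "insert i {l\<in>T. x l < x i} \<subseteq> {l\<in>T. x l \<le> z}" using assms(4) by auto
      then have "card (insert i {l\<in>T. x l < x i}) \<le> card {l\<in>T. x l \<le> z}"
        using assms(1) by (intro card_mono) auto
      moreover have "card (insert i {l\<in>T. x l < x i}) = j"
        using assms(1,2,5) by (subst card_insert_disjoint) auto
      ultimately show False using c by linarith
    qed
  qed
qed

lemma os_char_inj:
  assumes "finite T" "1 \<le> j" "j \<le> card T" "i \<in> T" "inj_on x T" "os j T x = x i"
  shows "card {l\<in>T. x l < x i} = j - 1"
proof -
  have le: "card {l\<in>T. x l < x i} < j"
  proof (cases "{l\<in>T. x l < x i} = {}")
    case True
    have "card {l\<in>T. x l < x i} = 0" by (subst True) simp
    then show ?thesis using assms(2) by linarith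
  next
    case False
    define z where "z = Max (x ` {l\<in>T. x l < x i})"
    have fin: "finite (x ` {l\<in>T. x l < x i})" using assms(1) by auto
    have zin: "z \<in> x ` {l\<in>T. x l < x i}" unfolding z_def using False fin Max_in by blast
    then have "z < x i" by auto
    moreover have "{l\<in>T. x l < x i} \<subseteq> {l\<in>T. x l \<le> z}" unfolding z_def using fin by auto
    then have "card {l\<in>T. x l < x i} \<le> card {l\<in>T. x l \<le> z}" using assms(1) by (intro card_mono) auto
    ultimately show ?thesis using os_threshold[OF assms(1-3), of z x] assms(6) by linarith
  qed
  have "\<not> card {l\<in>T. x l \<le> x i} < j" using os_threshold[OF assms(1-3), of "x i" x] assms(6) by simp
  moreover have "{l\<in>T. x l \<le> x i} = insert i {l\<in>T. x l < x i}"
    using assms(4,5) by (auto simp: inj_on_def) (metis order_le_less)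
  moreover have "card (insert i {l\<in>T. x l < x i}) = card {l\<in>T. x l < x i} + 1"
    using assms(1) by (subst card_insert_disjoint) auto
  ultimately have "j \<le> card {l\<in>T. x l < x i} + 1" by simp
  then show ?thesis using le by linarith
qed



lemma card_split_subsets:
  assumes "finite Lo" "finite Hi" "Lo \<inter> Hi = {}" "e \<notin> Lo" "e \<notin> Hi" "1 \<le> j" "j \<le> s"
  shows "card {T. T \<subseteq> insert e (Lo \<union> Hi) \<and> card T = s \<and> e \<in> T \<and> card (T \<inter> Lo) = j - 1}
         = (card Lo choose (j-1)) * (card Hi choose (s-j))"
proof -
  let ?A = "{A. A \<subseteq> Lo \<and> card A = j - 1}" and ?B = "{B. B \<subseteq> Hi \<and> card B = s - j}"
  let ?f = "\<lambda>(A,B). insert e (A \<union> B)"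
  have eq: "{T. T \<subseteq> insert e (Lo \<union> Hi) \<and> card T = s \<and> e \<in> T \<and> card (T \<inter> Lo) = j - 1} = ?f ` (?A \<times> ?B)"
  proof (intro set_eqI iffI)
    fix T assume T: "T \<in> {T. T \<subseteq> insert e (Lo \<union> Hi) \<and> card T = s \<and> e \<in> T \<and> card (T \<inter> Lo) = j - 1}"
    then have Tsub: "T \<subseteq> insert e (Lo \<union> Hi)" and cT: "card T = s" and eT: "e \<in> T" and cL: "card (T \<inter> Lo) = j - 1" by auto
    have Teq: "T = insert e ((T \<inter> Lo) \<union> (T \<inter> Hi))" using Tsub eT by auto
    have fin: "finite (T \<inter> Lo)" "finite (T \<inter> Hi)" using assms(1,2) by auto
    have "card T = Suc (card (T \<inter> Lo) + card (T \<inter> Hi))"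
      apply (subst Teq)
      apply (subst card_insert_disjoint)
      using fin assms(3,4,5) apply auto[2]
      apply (subst card_Un_disjoint)
      using fin assms(3) by auto
    then have "card (T \<inter> Hi) = s - j" using cT cL assms(6,7) by linarith
    then have "(T \<inter> Lo, T \<inter> Hi) \<in> ?A \<times> ?B" using cL by auto
    then show "T \<in> ?f ` (?A \<times> ?B)" using Teq by (auto intro!: image_eqI[where x="(T \<inter> Lo, T \<inter> Hi)"])
  next
    fix T assume "T \<in> ?f ` (?A \<times> ?B)"
    then obtain A B where AB: "A \<subseteq> Lo" "card A = j - 1" "B \<subseteq> Hi" "card B = s - j" and T: "T = insert e (A \<union> B)" by auto
    have fin: "finite A" "finite B" using AB assms(1,2) finite_subset by auto
    have dis: "A \<inter> B = {}" using AB assms(3) by auto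
    have "card T = Suc (card A + card B)" unfolding T
      using fin dis AB assms(4,5) by (subst card_insert_disjoint) (auto simp: card_Un_disjoint)
    then have "card T = s" using AB assms(6,7) by linarith
    moreover have "T \<inter> Lo = A" using T AB assms(3,4) by auto
    ultimately show "T \<in> {T. T \<subseteq> insert e (Lo \<union> Hi) \<and> card T = s \<and> e \<in> T \<and> card (T \<inter> Lo) = j - 1}"
      using T AB by auto
  qed
  have inj: "inj_on ?f (?A \<times> ?B)"
  proof (rule inj_onI, clarify)
    fix A B A' B'
    assume h: "A \<subseteq> Lo" "B \<subseteq> Hi" "A' \<subseteq> Lo" "B' \<subseteq> Hi" "insert e (A \<union> B) = insert e (A' \<union> B')"
    have "A = insert e (A \<union> B) \<inter> Lo" "B = insert e (A \<union> B) \<inter> Hi" using h assms(3,4,5) by auto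
    moreover have "A' = insert e (A' \<union> B') \<inter> Lo" "B' = insert e (A' \<union> B') \<inter> Hi" using h assms(3,4,5) by auto
    ultimately show "A = A' \<and> B = B'" using h(5) by metis
  qed
  show ?thesis unfolding eq
    by (subst card_image[OF inj]) (simp add: card_cartesian_product n_subsets assms(1,2))
qed

definition rk :: "nat \<Rightarrow> (nat \<Rightarrow> real) \<Rightarrow> nat \<Rightarrow> nat" where
  "rk m x i = (if i \<in> {1..m} then card {l\<in>{1..m}. x l \<le> x i} else i)"

lemma rk_less:
  assumes "i \<in> {1..m}" "l \<in> {1..m}"
  shows "rk m x i < rk m x l \<longleftrightarrow> x i < x l"
proof
  assume "rk m x i < rk m x l"
  show "x i < x l"
  proof (rule ccontr)
    assume "\<not> x i < x l"
    then have "{l'\<in>{1..m}. x l' \<le> x l} \<subseteq> {l'\<in>{1..m}. x l' \<le> x i}" by auto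
    then have "rk m x l \<le> rk m x i" using assms unfolding rk_def by (simp add: card_mono)
    then show False using \<open>rk m x i < rk m x l\<close> by linarith
  qed
next
  assume "x i < x l"
  then have "{l'\<in>{1..m}. x l' \<le> x i} \<subseteq> {l'\<in>{1..m}. x l' \<le> x l}" using assms by auto
  moreover have "l \<in> {l'\<in>{1..m}. x l' \<le> x l}" "l \<notin> {l'\<in>{1..m}. x l' \<le> x i}" using assms \<open>x i < x l\<close> by auto
  ultimately have "{l'\<in>{1..m}. x l' \<le> x i} \<subset> {l'\<in>{1..m}. x l' \<le> x l}" by blast
  then show "rk m x i < rk m x l" using assms unfolding rk_def by (simp add: psubset_card_mono)
qed

lemma rk_range: "i \<in> {1..m} \<Longrightarrow> rk m x i \<in> {1..m}"
proof -
  assume i: "i \<in> {1..m}"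
  have sub: "{l\<in>{1..m}. x l \<le> x i} \<subseteq> {1..m}" by auto
  have "card {l\<in>{1..m}. x l \<le> x i} \<le> card {1..m}" by (rule card_mono[OF _ sub]) simp
  then have "card {l\<in>{1..m}. x l \<le> x i} \<le> m" by simp
  moreover have "card {l\<in>{1..m}. x l \<le> x i} \<noteq> 0"
  proof -
    have "i \<in> {l\<in>{1..m}. x l \<le> x i}" using i by simp
    then have "card {l\<in>{1..m}. x l \<le> x i} > 0" by (intro card_gt_0_iff[THEN iffD2]) auto
    then show ?thesis by linarith
  qed
  ultimately have c: "1 \<le> card {l\<in>{1..m}. x l \<le> x i}" "card {l\<in>{1..m}. x l \<le> x i} \<le> m"
    by linarith+
  obtain c0 where c0: "c0 = card {l\<in>{1..m}. x l \<le> x i}" by blast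
  have eq: "rk m x i = c0" using i c0 by (simp add: rk_def)
  show ?thesis using c eq c0 by simp
qed

lemma rk_permutes:
  assumes "inj_on x {1..m}"
  shows "rk m x permutes {1..m}"
proof (rule bij_imp_permutes)
  have inj: "inj_on (rk m x) {1..m}"
  proof (rule inj_onI)
    fix i l assume il: "i \<in> {1..m}" "l \<in> {1..m}" "rk m x i = rk m x l"
    have "\<not> x i < x l" using rk_less[OF il(1,2), of x] il(3) by simp
    moreover have "\<not> x l < x i" using rk_less[OF il(2,1), of x] il(3) by simp
    ultimately have "x i = x l" by linarith
    then show "i = l" using inj_onD[OF assms _ il(1,2)] by blast
  qed
  moreover have "rk m x ` {1..m} = {1..m}"
  proof (rule endo_inj_surj)
    show "rk m x ` {1..m} \<subseteq> {1..m}" using rk_range by blast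
  qed (use inj in simp_all)
  ultimately show "bij_betw (rk m x) {1..m} {1..m}" by (simp add: bij_betw_def)
qed (metis rk_def)

lemma rk_lt_card:
  assumes "inj_on x {1..m}" "i \<in> {1..m}"
  shows "card {l\<in>{1..m}. x l < x i} = rk m x i - 1"
proof -
  have "{l\<in>{1..m}. x l \<le> x i} = insert i {l\<in>{1..m}. x l < x i}"
  proof (intro equalityI subsetI)
    fix l assume l: "l \<in> {l\<in>{1..m}. x l \<le> x i}"
    show "l \<in> insert i {l\<in>{1..m}. x l < x i}"
    proof (cases "l = i")
      case False
      then have "x l \<noteq> x i" using inj_onD[OF assms(1) _ _ assms(2), of l] l by blast
      then show ?thesis using l by auto
    qed simp
  qed (use assms(2) in auto)
  then have "card {l\<in>{1..m}. x l \<le> x i} = Suc (card {l\<in>{1..m}. x l < x i})"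
    by (simp add: card_insert_disjoint)
  then show ?thesis using assms(2) unfolding rk_def by simp
qed

lemma os_rk:
  assumes "inj_on x {1..m}" "i \<in> {1..m}"
  shows "os (rk m x i) {1..m} x = x i"
proof (rule os_unique)
  show "1 \<le> rk m x i" "rk m x i \<le> card {1..m}" using rk_range[OF assms(2), of x] by auto
  show "card {l\<in>{1..m}. x l < x i} = rk m x i - 1" by (rule rk_lt_card[OF assms])
qed (use assms in auto)

lemma sum_group_card:
  assumes "finite P" "finite A" "q ` P \<subseteq> A"
  shows "(\<Sum>T\<in>P. f (q T)) = (\<Sum>a\<in>A. real (card {T\<in>P. q T = a}) * f a)"
proof -
  have "(\<Sum>T\<in>P. f (q T)) = (\<Sum>a\<in>A. \<Sum>T\<in>{T\<in>P. q T = a}. f (q T))"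
    by (rule sum.group[symmetric]) (use assms in auto)
  also have "\<dots> = (\<Sum>a\<in>A. real (card {T\<in>P. q T = a}) * f a)"
    by (intro sum.cong refl) simp
  finally show ?thesis .
qed

lemma sum_os_identity:
  assumes inj: "inj_on x {1..n}" and j: "1 \<le> j" "j \<le> s" and sn: "s \<le> n"
  shows "(\<Sum>T\<in>{T. T \<subseteq> {1..n} \<and> card T = s}. os j T x)
       = (\<Sum>a\<in>{1..n}. real (((a-1) choose (j-1)) * ((n-a) choose (s-j))) * os a {1..n} x)"
proof -
  let ?P = "{T. T \<subseteq> {1..n} \<and> card T = s}"
  define q where "q T = card {l\<in>{1..n}. x l \<le> os j T x}" for T
  have finP: "finite ?P" by (rule finite_subset[of _ "Pow {1..n}"]) auto
  have key: "q T = rk n x i \<and> i \<in> {1..n}" if "T \<in> ?P" "i \<in> T" "os j T x = x i" for T i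
  proof -
    have i: "i \<in> {1..n}" using that(1,2) by blast
    have "q T = rk n x i" unfolding q_def using that(3) i by (simp add: rk_def)
    then show ?thesis using i by blast
  qed
  have qT: "q T \<in> {1..n} \<and> os j T x = os (q T) {1..n} x" if T: "T \<in> ?P" for T
  proof -
    have finT: "finite T" using T finite_subset[of T "{1..n}"] by simp
    have cT: "card T = s" using T by simp
    obtain i where i: "i \<in> T" "os j T x = x i" using os_mem[OF finT j(1), of x] cT j(2) by blast
    have k: "q T = rk n x i" "i \<in> {1..n}" using key[OF T i] by auto
    show ?thesis using k os_rk[OF inj k(2)] rk_range[OF k(2), of x] i(2) by simp
  qed
  have "(\<Sum>T\<in>?P. os j T x) = (\<Sum>T\<in>?P. os (q T) {1..n} x)" using qT by (intro sum.cong) auto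
  also have "\<dots> = (\<Sum>a\<in>{1..n}. real (card {T\<in>?P. q T = a}) * os a {1..n} x)"
    by (rule sum_group_card) (use finP qT in auto)
  also have "\<dots> = (\<Sum>a\<in>{1..n}. real (((a-1) choose (j-1)) * ((n-a) choose (s-j))) * os a {1..n} x)"
  proof (intro sum.cong refl arg_cong[where f="\<lambda>c. real c * _"])
    fix a assume a: "a \<in> {1..n}"
    have perm: "rk n x permutes {1..n}" by (rule rk_permutes[OF inj])
    then obtain e where e: "e \<in> {1..n}" "rk n x e = a" using a permutes_image[OF perm] by (metis imageE)
    define Lo where "Lo = {l\<in>{1..n}. x l < x e}"
    define Hi where "Hi = {l\<in>{1..n}. x e < x l}"
    have cLo: "card Lo = a - 1" unfolding Lo_def using rk_lt_card[OF inj e(1)] e(2) by simp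
    have U: "insert e (Lo \<union> Hi) = {1..n}"
    proof (intro equalityI subsetI)
      fix l assume l: "l \<in> {1..n}"
      show "l \<in> insert e (Lo \<union> Hi)"
      proof (cases "l = e")
        case False
        then have "x l \<noteq> x e" using inj e(1) l by (metis inj_onD)
        then have "x l < x e \<or> x e < x l" by linarith
        then show ?thesis using l unfolding Lo_def Hi_def by blast
      qed simp
    qed (use e(1) in \<open>auto simp: Lo_def Hi_def\<close>)
    have dis: "Lo \<inter> Hi = {}" "e \<notin> Lo" "e \<notin> Hi" unfolding Lo_def Hi_def by auto
    have "card (insert e (Lo \<union> Hi)) = Suc (card Lo + card Hi)"
      using dis by (subst card_insert_disjoint) (auto simp: Lo_def Hi_def card_Un_disjoint)
    then have cHi: "card Hi = n - a" using U cLo a by simp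
    have seteq: "{T\<in>?P. q T = a} = {T. T \<subseteq> insert e (Lo \<union> Hi) \<and> card T = s \<and> e \<in> T \<and> card (T \<inter> Lo) = j - 1}"
    proof (intro set_eqI iffI)
      fix T assume T: "T \<in> {T\<in>?P. q T = a}"
      then have TP: "T \<in> ?P" by simp
      have finT: "finite T" using T finite_subset[of T "{1..n}"] by simp
      have cT: "card T = s" using T by simp
    obtain i where i: "i \<in> T" "os j T x = x i" using os_mem[OF finT j(1), of x] cT j(2) by blast
      have "rk n x i = a" "i \<in> {1..n}" using key[OF TP i] T by auto
      moreover have "inj_on (rk n x) {1..n}" using perm by (rule permutes_inj_on)
      ultimately have "i = e" using e by (metis inj_onD)
      have injT: "inj_on x T" using inj T by (auto intro: inj_on_subset)
      have "card {l\<in>T. x l < x i} = j - 1"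
        by (rule os_char_inj[OF finT j(1) _ i(1) injT i(2)]) (use T j in auto)
      moreover have "{l\<in>T. x l < x i} = T \<inter> Lo" using T \<open>i = e\<close> unfolding Lo_def by auto
      ultimately show "T \<in> {T. T \<subseteq> insert e (Lo \<union> Hi) \<and> card T = s \<and> e \<in> T \<and> card (T \<inter> Lo) = j - 1}"
        using T U i \<open>i = e\<close> by auto
    next
      fix T assume T: "T \<in> {T. T \<subseteq> insert e (Lo \<union> Hi) \<and> card T = s \<and> e \<in> T \<and> card (T \<inter> Lo) = j - 1}"
      then have TP: "T \<in> ?P" using U by auto
      have finT: "finite T" using TP finite_subset[of T "{1..n}"] by simp
      have "{l\<in>T. x l < x e} = T \<inter> Lo" using TP unfolding Lo_def by auto
      then have "os j T x = x e" using T j by (intro os_unique[OF finT]) auto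
      then have "q T = a" using key[OF TP _ \<open>os j T x = x e\<close>] T e by auto
      then show "T \<in> {T\<in>?P. q T = a}" using TP by simp
    qed
    have finLH: "finite Lo" "finite Hi" unfolding Lo_def Hi_def by auto
    have "card {T. T \<subseteq> insert e (Lo \<union> Hi) \<and> card T = s \<and> e \<in> T \<and> card (T \<inter> Lo) = j - 1}
         = (card Lo choose (j-1)) * (card Hi choose (s-j))"
      by (rule card_split_subsets[OF finLH dis j])
    then show "card {T\<in>?P. q T = a} = ((a-1) choose (j-1)) * ((n-a) choose (s-j))"
      unfolding seteq cLo cHi .
  qed
  finally show ?thesis .
qed



abbreviation "M0 \<equiv> restrict_space lborel {0..1::real}"

lemma prob_M0: "prob_space M0"
proof
  show "emeasure M0 (space M0) = 1"
    by (simp add: emeasure_restrict_space space_restrict_space)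
qed

lemma prob_cube: "prob_space (cube n)"
  unfolding cube_def by (rule prob_space_PiM) (rule prob_M0)

lemma space_cube: "space (cube n) = PiE {1..n} (\<lambda>_. {0..1})"
  unfolding cube_def by (simp add: space_PiM space_restrict_space)

lemma coord_meas[measurable]: "i \<in> {1..n} \<Longrightarrow> (\<lambda>w. w i) \<in> borel_measurable (cube n)"
proof -
  assume i: "i \<in> {1..n}"
  have "(\<lambda>w. w i) \<in> measurable (cube n) M0" unfolding cube_def by (rule measurable_component_singleton[OF i])
  moreover have "(\<lambda>y. y) \<in> borel_measurable M0" by (rule measurable_restrict_space1) simp
  ultimately show ?thesis by (rule measurable_comp[where g="\<lambda>y. y", unfolded comp_def])
qed

lemma pred_coord_le_const: "i \<in> {1..n} \<Longrightarrow> Measurable.pred (cube n) (\<lambda>w. w i \<le> c)"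
  unfolding pred_def by (rule borel_measurable_le[OF coord_meas]) auto

lemma pred_coord_le: "i \<in> {1..n} \<Longrightarrow> l \<in> {1..n} \<Longrightarrow> Measurable.pred (cube n) (\<lambda>w. w i \<le> w l)"
  unfolding pred_def by (rule borel_measurable_le[OF coord_meas coord_meas])

lemma pred_coord_less: "i \<in> {1..n} \<Longrightarrow> l \<in> {1..n} \<Longrightarrow> Measurable.pred (cube n) (\<lambda>w. w i < w l)"
  unfolding pred_def by (rule borel_measurable_less[OF coord_meas coord_meas])

lemma perm_in: "\<pi> permutes {1..n} \<Longrightarrow> i \<in> {1..n} \<Longrightarrow> \<pi> i \<in> {1..n}"
  using permutes_in_image[of \<pi> "{1..n}" i] by blast

lemma card_ge_iff_subset:
  assumes "finite I"
  shows "a \<le> card {i\<in>I. P i} \<longleftrightarrow> (\<exists>U\<in>{U. U \<subseteq> I \<and> card U = a}. \<forall>i\<in>U. P i)"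
proof
  assume "a \<le> card {i\<in>I. P i}"
  then obtain U where "U \<subseteq> {i\<in>I. P i}" "card U = a" by (meson obtain_subset_with_card_n)
  then show "\<exists>U\<in>{U. U \<subseteq> I \<and> card U = a}. \<forall>i\<in>U. P i" by auto
next
  assume "\<exists>U\<in>{U. U \<subseteq> I \<and> card U = a}. \<forall>i\<in>U. P i"
  then obtain U where U: "U \<subseteq> I" "card U = a" "\<forall>i\<in>U. P i" by auto
  then have "U \<subseteq> {i\<in>I. P i}" by auto
  then show "a \<le> card {i\<in>I. P i}" using U assms by (metis (no_types, lifting) card_mono finite_subset mem_Collect_eq subsetI)
qed

lemma pred_neg:
  assumes "Measurable.pred M P"
  shows "Measurable.pred M (\<lambda>x. \<not> P x)"
proof -
  have "space M - {x\<in>space M. P x} \<in> sets M" using assms by (intro sets.compl_sets) (simp add: pred_def)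
  moreover have "space M - {x\<in>space M. P x} = {x\<in>space M. \<not> P x}" by auto
  ultimately show ?thesis by (simp add: pred_def)
qed

lemma pred_finite_Bex:
  assumes fin: "finite F" and h: "\<And>U. U \<in> F \<Longrightarrow> Measurable.pred M (Q U)"
  shows "Measurable.pred M (\<lambda>w. \<exists>U\<in>F. Q U w)"
proof -
  have "{w\<in>space M. \<exists>U\<in>F. Q U w} = (\<Union>U\<in>F. {w\<in>space M. Q U w})" by auto
  moreover have "(\<Union>U\<in>F. {w\<in>space M. Q U w}) \<in> sets M"
    using h fin by (intro sets.finite_UN) (auto simp: pred_def)
  ultimately show ?thesis by (simp add: pred_def)
qed

lemma pred_finite_Ball:
  assumes fin: "finite F" and h: "\<And>U. U \<in> F \<Longrightarrow> Measurable.pred M (Q U)"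
  shows "Measurable.pred M (\<lambda>w. \<forall>U\<in>F. Q U w)"
proof -
  have "Measurable.pred M (\<lambda>w. \<exists>U\<in>F. \<not> Q U w)"
    by (rule pred_finite_Bex[OF fin], rule pred_neg, rule h)
  then have "Measurable.pred M (\<lambda>w. \<not> (\<exists>U\<in>F. \<not> Q U w))"
    by (rule pred_neg)
  then show ?thesis by simp
qed

lemma pred_card_less:
  assumes "finite I" "\<And>i. i \<in> I \<Longrightarrow> Measurable.pred M (P i)"
  shows "Measurable.pred M (\<lambda>w. card {i\<in>I. P i w} < a)"
proof -
  have fin: "finite {U. U \<subseteq> I \<and> card U = a}" using assms(1) by simp
  have "Measurable.pred M (\<lambda>w. \<exists>U\<in>{U. U \<subseteq> I \<and> card U = a}. \<forall>i\<in>U. P i w)"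
  proof (rule pred_finite_Bex[OF fin])
    fix U assume U: "U \<in> {U. U \<subseteq> I \<and> card U = a}"
    then have "finite U" using assms(1) finite_subset by blast
    then show "Measurable.pred M (\<lambda>w. \<forall>i\<in>U. P i w)"
      by (rule pred_finite_Ball) (use U assms(2) in auto)
  qed
  then have "Measurable.pred M (\<lambda>w. \<not> (\<exists>U\<in>{U. U \<subseteq> I \<and> card U = a}. \<forall>i\<in>U. P i w))"
    by (rule pred_neg)
  moreover have "(\<lambda>w. card {i\<in>I. P i w} < a) = (\<lambda>w. \<not> (\<exists>U\<in>{U. U \<subseteq> I \<and> card U = a}. \<forall>i\<in>U. P i w))"
  proof
    fix w
    show "(card {i\<in>I. P i w} < a) = (\<not> (\<exists>U\<in>{U. U \<subseteq> I \<and> card U = a}. \<forall>i\<in>U. P i w))"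
      using card_ge_iff_subset[OF assms(1), of a "\<lambda>i. P i w"] by linarith
  qed
  ultimately show ?thesis by simp
qed

lemma os_meas:
  assumes "T \<subseteq> {1..n}" "1 \<le> j" "j \<le> card T"
  shows "os j T \<in> borel_measurable (cube n)"
proof -
  have finT: "finite T" using assms(1) finite_subset by blast
  show ?thesis
  proof (subst borel_measurable_iff_le, intro allI)
    fix c :: real
    have "{w \<in> space (cube n). os j T w \<le> c} = {w \<in> space (cube n). \<not> card {i\<in>T. w i \<le> c} < j}"
      using os_threshold[OF finT assms(2,3)] by (auto simp: not_less[symmetric])
    moreover have "Measurable.pred (cube n) (\<lambda>w. card {i\<in>T. w i \<le> c} < j)"
      by (rule pred_card_less[OF finT], rule pred_coord_le_const) (use assms(1) in auto)
    ultimately show "{w \<in> space (cube n). os j T w \<le> c} \<in> sets (cube n)"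
      by (simp add: pred_def sets.sets_Collect_neg)
  qed
qed

lemma ostat_meas:
  assumes "b \<le> n + 1"
  shows "(\<lambda>x. ostat n x b) \<in> borel_measurable (cube n)"
proof (cases "b = 0 \<or> b = n + 1")
  case True then show ?thesis unfolding ostat_def by auto
next
  case False
  then have "(\<lambda>x. ostat n x b) = os b {1..n}" unfolding ostat_def by auto
  moreover have "os b {1..n} \<in> borel_measurable (cube n)" by (rule os_meas) (use False assms in auto)
  ultimately show ?thesis by simp
qed

lemma os_range:
  assumes "x \<in> space (cube n)" "T \<subseteq> {1..n}" "1 \<le> j" "j \<le> card T"
  shows "0 \<le> os j T x \<and> os j T x \<le> 1"
proof -
  have finT: "finite T" using assms(2) finite_subset by blast
  obtain i where "i \<in> T" "os j T x = x i" using os_mem[OF finT assms(3,4)] by blast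
  then show ?thesis using assms(1,2) by (auto simp: space_cube PiE_iff)
qed

lemma ostat_range:
  assumes "x \<in> space (cube n)" "b \<le> n + 1"
  shows "0 \<le> ostat n x b \<and> ostat n x b \<le> 1"
  using os_range[OF assms(1), of "{1..n}" b] assms(2) unfolding ostat_def by auto

definition reidx :: "nat \<Rightarrow> (nat \<Rightarrow> nat) \<Rightarrow> (nat \<Rightarrow> real) \<Rightarrow> (nat \<Rightarrow> real)" where
  "reidx n \<pi> x = (\<lambda>i\<in>{1..n}. x (\<pi> i))"

lemma reidx_meas:
  assumes "\<pi> permutes {1..n}"
  shows "reidx n \<pi> \<in> measurable (cube n) (cube n)"
  unfolding reidx_def cube_def
proof (rule measurable_restrict)
  fix i assume i: "i \<in> {1..n}"
  have "\<pi> i \<in> {1..n}" by (rule perm_in[OF assms i])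
  then show "(\<lambda>x. x (\<pi> i)) \<in> PiM {1..n} (\<lambda>_. M0) \<rightarrow>\<^sub>M M0" by (rule measurable_component_singleton)
qed

lemma distr_reidx:
  assumes "\<pi> permutes {1..n}"
  shows "distr (cube n) (cube n) (reidx n \<pi>) = cube n"
proof -
  have "distr (PiM {1..n} (\<lambda>_. M0)) (PiM {1..n} (\<lambda>i. (\<lambda>_. M0) (\<pi> i))) (\<lambda>\<omega>. \<lambda>i\<in>{1..n}. \<omega> (\<pi> i))
        = PiM {1..n} (\<lambda>i. (\<lambda>_. M0) (\<pi> i))"
  proof (rule distr_PiM_reindex)
    show "inj_on \<pi> {1..n}" using assms by (rule permutes_inj_on)
    show "\<pi> \<in> {1..n} \<rightarrow> {1..n}" by (intro Pi_I perm_in[OF assms])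
  qed (rule prob_M0)
  then show ?thesis unfolding cube_def reidx_def by simp
qed

lemma integral_reidx:
  fixes f :: "(nat \<Rightarrow> real) \<Rightarrow> real"
  assumes "\<pi> permutes {1..n}" "f \<in> borel_measurable (cube n)"
  shows "(\<integral>x. f x \<partial>cube n) = (\<integral>x. f (reidx n \<pi> x) \<partial>cube n)"
proof -
  have "(\<integral>x. f x \<partial>cube n) = (\<integral>x. f x \<partial>distr (cube n) (cube n) (reidx n \<pi>))"
    using distr_reidx[OF assms(1)] by simp
  also have "\<dots> = (\<integral>x. f (reidx n \<pi> x) \<partial>cube n)"
    by (rule integral_distr[OF reidx_meas[OF assms(1)] assms(2)])
  finally show ?thesis .
qed

lemma measure_reidx:
  assumes "\<pi> permutes {1..n}" "A \<in> sets (cube n)"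
  shows "measure (cube n) A = measure (cube n) (reidx n \<pi> -` A \<inter> space (cube n))"
proof -
  have "measure (cube n) A = measure (distr (cube n) (cube n) (reidx n \<pi>)) A"
    using distr_reidx[OF assms(1)] by simp
  also have "\<dots> = measure (cube n) (reidx n \<pi> -` A \<inter> space (cube n))"
    by (rule measure_distr[OF reidx_meas[OF assms(1)] assms(2)])
  finally show ?thesis .
qed



interpretation PSF: product_sigma_finite "\<lambda>_::nat. M0"
  by (intro product_sigma_finite.intro prob_space_imp_sigma_finite prob_M0)

lemma null_diag:
  assumes i: "i \<in> {1..N}" and l: "l \<in> {1..N}" and il: "i \<noteq> l"
  shows "{x\<in>space (cube N). x i = x l} \<in> null_sets (cube N)"
proof -
  let ?A = "{x\<in>space (cube N). x i = x l}"
  let ?I = "{1..N} - {i}"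
  have Aset: "?A \<in> sets (cube N)" using coord_meas[OF i] coord_meas[OF l] by measurable
  have ins: "insert i ?I = {1..N}" using i by auto
  have cubeeq: "cube N = PiM (insert i ?I) (\<lambda>_. M0)" unfolding cube_def ins ..
  have "emeasure (cube N) ?A = (\<integral>\<^sup>+ x. indicator ?A x \<partial>cube N)"
    using Aset by simp
  also have "\<dots> = (\<integral>\<^sup>+ x. indicator ?A x \<partial>PiM (insert i ?I) (\<lambda>_. M0))"
    by (simp only: cubeeq)
  also have "\<dots> = (\<integral>\<^sup>+ x. (\<integral>\<^sup>+ y. indicator ?A (x(i := y)) \<partial>M0) \<partial>PiM ?I (\<lambda>_. M0))"
  proof (rule PSF.product_nn_integral_insert)
    show "finite ?I" by simp
    show "i \<notin> ?I" by simp
    have "indicator ?A \<in> borel_measurable (cube N)" by (rule borel_measurable_indicator[OF Aset])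
    then show "indicator ?A \<in> borel_measurable (PiM (insert i ?I) (\<lambda>_. M0))" by (simp only: cubeeq)
  qed
  also have "\<dots> = (\<integral>\<^sup>+ x. 0 \<partial>PiM ?I (\<lambda>_. M0))"
  proof (rule nn_integral_cong)
    fix x assume x: "x \<in> space (PiM ?I (\<lambda>_. M0))"
    have "(\<integral>\<^sup>+ y. indicator ?A (x(i := y)) \<partial>M0) \<le> (\<integral>\<^sup>+ y. indicator {x l} y \<partial>M0)"
    proof (rule nn_integral_mono)
      fix y
      show "indicator ?A (x(i := y)) \<le> (indicator {x l} y :: ennreal)"
      proof (cases "x(i := y) \<in> ?A")
        case True
        then have "(x(i := y)) i = (x(i := y)) l" by blast
        then have "y = x l" using il by simp
        then show ?thesis by (simp add: indicator_def)
      qed simp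
    qed
    also have "\<dots> = (\<integral>\<^sup>+ y. indicator {x l} y * indicator {0..1} y \<partial>lborel)"
      by (rule nn_integral_restrict_space) simp
    also have "\<dots> \<le> (\<integral>\<^sup>+ y. indicator {x l} y \<partial>lborel)"
      by (rule nn_integral_mono) (auto simp: indicator_def)
    also have "\<dots> = 0" by simp
    finally show "(\<integral>\<^sup>+ y. indicator ?A (x(i := y)) \<partial>M0) = 0" by simp
  qed
  also have "\<dots> = 0" by simp
  finally show ?thesis using Aset by (simp add: null_sets_def)
qed

lemma AE_inj: "AE x in cube N. inj_on x {1..N}"
proof -
  have "AE x in cube N. \<forall>i\<in>{1..N}. \<forall>l\<in>{1..N}. i \<noteq> l \<longrightarrow> x i \<noteq> x l"
  proof (intro AE_finite_allI finite_atLeastAtMost)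
    fix i l assume i: "i \<in> {1..N}" and l: "l \<in> {1..N}"
    show "AE x in cube N. i \<noteq> l \<longrightarrow> x i \<noteq> x l"
    proof (cases "i = l")
      case False
      show ?thesis by (rule AE_I'[OF null_diag[OF i l False]]) auto
    qed simp
  qed
  then show ?thesis by eventually_elim (auto simp: inj_on_def)
qed

definition Ev :: "nat \<Rightarrow> (nat \<Rightarrow> nat) \<Rightarrow> (nat \<Rightarrow> real) set" where
  "Ev N \<sigma> = {x\<in>space (cube N). \<forall>i\<in>{1..N}. \<forall>l\<in>{1..N}. \<sigma> i < \<sigma> l \<longrightarrow> x i < x l}"

lemma pred_imp_const: "Measurable.pred M P \<Longrightarrow> Measurable.pred M (\<lambda>x. c \<longrightarrow> P x)"
  by (cases c) auto

lemma Ev_sets: "Ev N \<sigma> \<in> sets (cube N)"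
proof -
  have "Measurable.pred (cube N) (\<lambda>x. \<forall>i\<in>{1..N}. \<forall>l\<in>{1..N}. \<sigma> i < \<sigma> l \<longrightarrow> x i < x l)"
    by (intro pred_finite_Ball finite_atLeastAtMost pred_imp_const pred_coord_less)
  then show ?thesis unfolding Ev_def pred_def .
qed

lemma card_perm_le:
  assumes "\<sigma> permutes {1..N}" "i \<in> {1..N}"
  shows "card {l\<in>{1..N}. \<sigma> l \<le> \<sigma> i} = \<sigma> i"
proof -
  have si: "\<sigma> i \<in> {1..N}" by (rule perm_in[OF assms])
  have inj: "inj_on \<sigma> {l\<in>{1..N}. \<sigma> l \<le> \<sigma> i}" using permutes_inj_on[OF assms(1)] by (rule inj_on_subset) auto
  have "\<sigma> ` {l\<in>{1..N}. \<sigma> l \<le> \<sigma> i} = {1..\<sigma> i}"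
  proof (intro equalityI subsetI)
    fix v assume "v \<in> \<sigma> ` {l\<in>{1..N}. \<sigma> l \<le> \<sigma> i}"
    then obtain l where "l \<in> {1..N}" "\<sigma> l \<le> \<sigma> i" "v = \<sigma> l" by auto
    then show "v \<in> {1..\<sigma> i}" using perm_in[OF assms(1) \<open>l \<in> {1..N}\<close>] by auto
  next
    fix v assume v: "v \<in> {1..\<sigma> i}"
    then have "v \<in> {1..N}" using si by auto
    then obtain l where l: "l \<in> {1..N}" "\<sigma> l = v" using permutes_image[OF assms(1)] by (metis imageE)
    then show "v \<in> \<sigma> ` {l\<in>{1..N}. \<sigma> l \<le> \<sigma> i}" using v by auto
  qed
  then have "card (\<sigma> ` {l\<in>{1..N}. \<sigma> l \<le> \<sigma> i}) = \<sigma> i" by simp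
  then show ?thesis using card_image[OF inj] by simp
qed

lemma Ev_rk:
  assumes perm: "\<sigma> permutes {1..N}" and x: "x \<in> Ev N \<sigma>"
  shows "rk N x = \<sigma>" "inj_on x {1..N}"
proof -
  have ord: "\<And>i l. i \<in> {1..N} \<Longrightarrow> l \<in> {1..N} \<Longrightarrow> \<sigma> i < \<sigma> l \<Longrightarrow> x i < x l"
    using x unfolding Ev_def by auto
  have injs: "inj_on \<sigma> {1..N}" by (rule permutes_inj_on[OF perm])
  have le: "x l \<le> x i \<longleftrightarrow> \<sigma> l \<le> \<sigma> i" if "i \<in> {1..N}" "l \<in> {1..N}" for i l
  proof (cases "i = l")
    case False
    then have "\<sigma> i \<noteq> \<sigma> l" using injs that by (metis inj_onD)
    then consider "\<sigma> i < \<sigma> l" | "\<sigma> l < \<sigma> i" by linarith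
    then show ?thesis using ord[OF that] ord[OF that(2,1)] by cases auto
  qed simp
  show "inj_on x {1..N}"
  proof (rule inj_onI)
    fix i l assume il: "i \<in> {1..N}" "l \<in> {1..N}" "x i = x l"
    then have "\<sigma> l \<le> \<sigma> i" "\<sigma> i \<le> \<sigma> l" using le[OF il(1,2)] le[OF il(2,1)] by auto
    then have "\<sigma> i = \<sigma> l" by simp
    then show "i = l" using injs il by (metis inj_onD)
  qed
  show "rk N x = \<sigma>"
  proof
    fix i show "rk N x i = \<sigma> i"
    proof (cases "i \<in> {1..N}")
      case True
      have "{l\<in>{1..N}. x l \<le> x i} = {l\<in>{1..N}. \<sigma> l \<le> \<sigma> i}" using le[OF True] by auto
      then show ?thesis using True card_perm_le[OF perm True] by (simp add: rk_def)
    next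
      case False
      then show ?thesis unfolding rk_def if_not_P[OF False] using permutes_not_in[OF perm False] by simp
    qed
  qed
qed

lemma rk_Ev:
  assumes "x \<in> space (cube N)" "inj_on x {1..N}"
  shows "x \<in> Ev N (rk N x)"
  unfolding Ev_def using assms(1) rk_less by auto

lemma measure_count:
  assumes A: "A \<in> sets (cube N)"
    and h: "\<And>\<sigma> x. \<sigma> permutes {1..N} \<Longrightarrow> x \<in> Ev N \<sigma> \<Longrightarrow> (x \<in> A \<longleftrightarrow> \<Phi> \<sigma>)"
  shows "measure (cube N) A = (\<Sum>\<sigma>\<in>{\<sigma>. \<sigma> permutes {1..N} \<and> \<Phi> \<sigma>}. measure (cube N) (Ev N \<sigma>))"
proof -
  interpret P: prob_space "cube N" by (rule prob_cube)
  let ?S = "{\<sigma>. \<sigma> permutes {1..N} \<and> \<Phi> \<sigma>}"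
  have "?S \<subseteq> {\<sigma>. \<sigma> permutes {1..N}}" by blast
  then have finS: "finite ?S" by (rule finite_subset) (rule finite_permutations, simp)
  have Bset: "(\<Union>\<sigma>\<in>?S. Ev N \<sigma>) \<in> sets (cube N)"
    using finS Ev_sets by (intro sets.finite_UN) auto
  have "AE x in cube N. x \<in> A \<longleftrightarrow> x \<in> (\<Union>\<sigma>\<in>?S. Ev N \<sigma>)"
    using AE_inj[of N]
  proof (rule AE_mp, intro AE_I2 impI)
    fix x assume x: "x \<in> space (cube N)" and inj: "inj_on x {1..N}"
    have p: "rk N x permutes {1..N}" by (rule rk_permutes[OF inj])
    have e: "x \<in> Ev N (rk N x)" by (rule rk_Ev[OF x inj])
    have "x \<in> (\<Union>\<sigma>\<in>?S. Ev N \<sigma>) \<longleftrightarrow> \<Phi> (rk N x)"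
    proof
      assume "x \<in> (\<Union>\<sigma>\<in>?S. Ev N \<sigma>)"
      then obtain \<sigma> where s: "\<sigma> permutes {1..N}" "\<Phi> \<sigma>" "x \<in> Ev N \<sigma>" by auto
      have "rk N x = \<sigma>" by (rule Ev_rk(1)[OF s(1,3)])
      then show "\<Phi> (rk N x)" using s(2) by simp
    qed (use p e in auto)
    then show "x \<in> A \<longleftrightarrow> x \<in> (\<Union>\<sigma>\<in>?S. Ev N \<sigma>)" using h[OF p e] by simp
  qed
  then have "measure (cube N) A = measure (cube N) (\<Union>\<sigma>\<in>?S. Ev N \<sigma>)"
    by (rule measure_eq_AE[OF _ A Bset])
  also have "\<dots> = (\<Sum>\<sigma>\<in>?S. measure (cube N) (Ev N \<sigma>))"
  proof (rule P.finite_measure_finite_Union[OF finS])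
    show "(\<lambda>\<sigma>. Ev N \<sigma>) ` ?S \<subseteq> sets (cube N)" using Ev_sets by auto
    show "disjoint_family_on (\<lambda>\<sigma>. Ev N \<sigma>) ?S"
      unfolding disjoint_family_on_def
    proof (intro ballI impI)
      fix \<sigma> \<tau> assume "\<sigma> \<in> ?S" "\<tau> \<in> ?S" "\<sigma> \<noteq> \<tau>"
      then show "Ev N \<sigma> \<inter> Ev N \<tau> = {}" using Ev_rk(1)[of \<sigma> N] Ev_rk(1)[of \<tau> N] by auto
    qed
  qed
  finally show ?thesis .
qed

lemma Ev_reidx:
  assumes perm: "\<sigma> permutes {1..N}"
  shows "reidx N \<sigma> -` Ev N \<sigma> \<inter> space (cube N) = Ev N id"
proof -
  have sp: "reidx N \<sigma> x \<in> space (cube N)" if "x \<in> space (cube N)" for x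
    using measurable_space[OF reidx_meas[OF perm] that] .
  have "(\<forall>i\<in>{1..N}. \<forall>l\<in>{1..N}. \<sigma> i < \<sigma> l \<longrightarrow> x (\<sigma> i) < x (\<sigma> l)) \<longleftrightarrow>
        (\<forall>a\<in>{1..N}. \<forall>b\<in>{1..N}. a < b \<longrightarrow> x a < x b)" for x
  proof
    assume H: "\<forall>i\<in>{1..N}. \<forall>l\<in>{1..N}. \<sigma> i < \<sigma> l \<longrightarrow> x (\<sigma> i) < x (\<sigma> l)"
    show "\<forall>a\<in>{1..N}. \<forall>b\<in>{1..N}. a < b \<longrightarrow> x a < x b"
    proof (intro ballI impI)
      fix a b assume a: "a \<in> {1..N}" and b: "b \<in> {1..N}" and ab: "a < b"
      obtain i where i: "i \<in> {1..N}" "\<sigma> i = a" using a permutes_image[OF perm] by (metis imageE)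
      obtain l where l: "l \<in> {1..N}" "\<sigma> l = b" using b permutes_image[OF perm] by (metis imageE)
      show "x a < x b" using H i l ab by auto
    qed
  next
    assume H: "\<forall>a\<in>{1..N}. \<forall>b\<in>{1..N}. a < b \<longrightarrow> x a < x b"
    show "\<forall>i\<in>{1..N}. \<forall>l\<in>{1..N}. \<sigma> i < \<sigma> l \<longrightarrow> x (\<sigma> i) < x (\<sigma> l)"
      using H perm_in[OF perm] by blast
  qed
  note eqv = this
  have R: "reidx N \<sigma> x i = x (\<sigma> i)" if "i \<in> {1..N}" for x i using that by (simp add: reidx_def)
  have mem: "reidx N \<sigma> x \<in> Ev N \<sigma> \<longleftrightarrow> (\<forall>i\<in>{1..N}. \<forall>l\<in>{1..N}. \<sigma> i < \<sigma> l \<longrightarrow> x (\<sigma> i) < x (\<sigma> l))"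
    if x: "x \<in> space (cube N)" for x
  proof -
    have "reidx N \<sigma> x \<in> Ev N \<sigma> \<longleftrightarrow> (\<forall>i\<in>{1..N}. \<forall>l\<in>{1..N}. \<sigma> i < \<sigma> l \<longrightarrow> reidx N \<sigma> x i < reidx N \<sigma> x l)"
      unfolding Ev_def using sp[OF x] by blast
    also have "\<dots> \<longleftrightarrow> (\<forall>i\<in>{1..N}. \<forall>l\<in>{1..N}. \<sigma> i < \<sigma> l \<longrightarrow> x (\<sigma> i) < x (\<sigma> l))"
      using R by (intro ball_cong refl) simp
    finally show ?thesis .
  qed
  show ?thesis
  proof (intro equalityI subsetI)
    fix x assume "x \<in> reidx N \<sigma> -` Ev N \<sigma> \<inter> space (cube N)"
    then have x: "x \<in> space (cube N)" "reidx N \<sigma> x \<in> Ev N \<sigma>" by auto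
    then have "\<forall>a\<in>{1..N}. \<forall>b\<in>{1..N}. a < b \<longrightarrow> x a < x b" using mem eqv by blast
    then show "x \<in> Ev N id" unfolding Ev_def using x(1) by simp
  next
    fix x assume x: "x \<in> Ev N id"
    then have xs: "x \<in> space (cube N)" and "\<forall>a\<in>{1..N}. \<forall>b\<in>{1..N}. a < b \<longrightarrow> x a < x b"
      unfolding Ev_def by auto
    then have "reidx N \<sigma> x \<in> Ev N \<sigma>" using mem[OF xs] eqv by blast
    then show "x \<in> reidx N \<sigma> -` Ev N \<sigma> \<inter> space (cube N)" using xs by blast
  qed
qed

lemma prob_Ev:
  assumes perm: "\<sigma> permutes {1..N}"
  shows "measure (cube N) (Ev N \<sigma>) = 1 / fact N"
proof -
  have eq: "measure (cube N) (Ev N \<tau>) = measure (cube N) (Ev N id)" if "\<tau> permutes {1..N}" for \<tau>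
  proof -
    have "measure (cube N) (Ev N \<tau>) = measure (cube N) (reidx N \<tau> -` Ev N \<tau> \<inter> space (cube N))"
      by (rule measure_reidx[OF that Ev_sets])
    also have "\<dots> = measure (cube N) (Ev N id)" by (simp only: Ev_reidx[OF that])
    finally show ?thesis .
  qed
  interpret P: prob_space "cube N" by (rule prob_cube)
  have sp: "space (cube N) \<in> sets (cube N)" by simp
  have "1 = measure (cube N) (space (cube N))" by (simp add: P.prob_space)
  also have "\<dots> = (\<Sum>\<tau>\<in>{\<tau>. \<tau> permutes {1..N} \<and> True}. measure (cube N) (Ev N \<tau>))"
  proof (rule measure_count[OF sp])
    fix \<tau> x assume "x \<in> Ev N \<tau>"
    then show "x \<in> space (cube N) \<longleftrightarrow> True" unfolding Ev_def by blast
  qed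
  also have "\<dots> = (\<Sum>\<tau>\<in>{\<tau>. \<tau> permutes {1..N}}. measure (cube N) (Ev N id))"
  proof (rule sum.cong)
    fix \<tau> assume "\<tau> \<in> {\<tau>. \<tau> permutes {1..N}}"
    then show "measure (cube N) (Ev N \<tau>) = measure (cube N) (Ev N id)" using eq by blast
  qed simp
  also have "\<dots> = real (card {\<tau>. \<tau> permutes {1..N}}) * measure (cube N) (Ev N id)"
    by (rule sum_constant)
  also have "card {\<tau>. \<tau> permutes {1..N}} = fact N"
    by (rule card_permutations) auto
  finally have "1 = fact N * measure (cube N) (Ev N id)" by (simp add: id_def)
  moreover obtain m where m: "m = measure (cube N) (Ev N id)" by blast
  ultimately have "1 = fact N * m" by simp
  then have "m = 1 / fact N" by (simp add: field_simps)
  then show ?thesis using eq[OF perm] m by simp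
qed

lemma measure_count_card:
  assumes A: "A \<in> sets (cube N)"
    and h: "\<And>\<sigma> x. \<sigma> permutes {1..N} \<Longrightarrow> x \<in> Ev N \<sigma> \<Longrightarrow> (x \<in> A \<longleftrightarrow> \<Phi> \<sigma>)"
  shows "measure (cube N) A = card {\<sigma>. \<sigma> permutes {1..N} \<and> \<Phi> \<sigma>} / fact N"
proof -
  have "measure (cube N) A = (\<Sum>\<sigma>\<in>{\<sigma>. \<sigma> permutes {1..N} \<and> \<Phi> \<sigma>}. measure (cube N) (Ev N \<sigma>))"
    by (rule measure_count[OF A h])
  also have "\<dots> = (\<Sum>\<sigma>\<in>{\<sigma>. \<sigma> permutes {1..N} \<and> \<Phi> \<sigma>}. 1 / fact N)"
  proof (rule sum.cong)
    fix \<sigma> assume "\<sigma> \<in> {\<sigma>. \<sigma> permutes {1..N} \<and> \<Phi> \<sigma>}"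
    then show "measure (cube N) (Ev N \<sigma>) = 1 / fact N" using prob_Ev by blast
  qed simp
  also have "\<dots> = card {\<sigma>. \<sigma> permutes {1..N} \<and> \<Phi> \<sigma>} / fact N" by simp
  finally show ?thesis .
qed



lemma card_perm_fiber:
  assumes u: "u \<in> {1..n+2}" and v: "v \<in> {1..n+2}" and uv: "u \<noteq> v"
  shows "card {\<sigma>. \<sigma> permutes {1..n+2} \<and> \<sigma> (n+1) = u \<and> \<sigma> (n+2) = v} = fact n"
proof -
  let ?N = "{1..n+2}"
  define \<rho>1 where "\<rho>1 = Transposition.transpose (n+1) u"
  define w0 where "w0 = \<rho>1 (n+2)"
  define \<tau> where "\<tau> = Transposition.transpose w0 v \<circ> \<rho>1"
  have p1: "\<rho>1 permutes ?N" unfolding \<rho>1_def by (rule permutes_swap_id) (use u in auto)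
  have w0N: "w0 \<in> ?N" unfolding w0_def by (rule perm_in[OF p1]) simp
  have pt: "\<tau> permutes ?N" unfolding \<tau>_def
    by (rule permutes_compose[OF p1], rule permutes_swap_id[OF w0N v])
  have r1: "\<rho>1 (n+1) = u" unfolding \<rho>1_def by simp
  have w0u: "w0 \<noteq> u"
  proof
    assume "w0 = u"
    then have "\<rho>1 (n+2) = \<rho>1 (n+1)" using r1 w0_def by simp
    then show False using inj_eq[OF permutes_inj[OF p1], of "n+2" "n+1"] by simp
  qed
  have t1: "\<tau> (n+1) = u" unfolding \<tau>_def using r1 w0u uv by simp
  have t2: "\<tau> (n+2) = v" unfolding \<tau>_def w0_def by simp
  have injt: "inj \<tau>" by (rule permutes_inj[OF pt])
  have eq: "{\<sigma>. \<sigma> permutes ?N \<and> \<sigma> (n+1) = u \<and> \<sigma> (n+2) = v} = (\<lambda>\<rho>. \<tau> \<circ> \<rho>) ` {\<rho>. \<rho> permutes {1..n}}"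
  proof (intro equalityI subsetI)
    fix \<sigma> assume "\<sigma> \<in> {\<sigma>. \<sigma> permutes ?N \<and> \<sigma> (n+1) = u \<and> \<sigma> (n+2) = v}"
    then have s: "\<sigma> permutes ?N" "\<sigma> (n+1) = u" "\<sigma> (n+2) = v" by auto
    define \<rho> where "\<rho> = inv \<tau> \<circ> \<sigma>"
    have pr: "\<rho> permutes ?N" unfolding \<rho>_def by (rule permutes_compose[OF s(1) permutes_inv[OF pt]])
    have "\<rho> (n+1) = n+1" unfolding \<rho>_def using s(2) t1 permutes_inverses(2)[OF pt, of "n+1"] by simp
    moreover have "\<rho> (n+2) = n+2" unfolding \<rho>_def using s(3) t2 permutes_inverses(2)[OF pt, of "n+2"] by simp
    ultimately have "\<rho> permutes {1..n}"
    proof (intro permutes_superset[OF pr])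
      fix x assume "x \<in> ?N - {1..n}" "\<rho> (n+1) = n+1" "\<rho> (n+2) = n+2"
      then show "\<rho> x = x" by (cases "x = n+1") (auto simp: le_Suc_eq)
    qed
    moreover have "\<tau> \<circ> \<rho> = \<sigma>" unfolding \<rho>_def
      by (simp add: o_assoc permutes_inv_o(1)[OF pt])
    ultimately show "\<sigma> \<in> (\<lambda>\<rho>. \<tau> \<circ> \<rho>) ` {\<rho>. \<rho> permutes {1..n}}" by blast
  next
    fix \<sigma> assume "\<sigma> \<in> (\<lambda>\<rho>. \<tau> \<circ> \<rho>) ` {\<rho>. \<rho> permutes {1..n}}"
    then obtain \<rho> where r: "\<rho> permutes {1..n}" "\<sigma> = \<tau> \<circ> \<rho>" by auto
    have rN: "\<rho> permutes ?N" by (rule permutes_subset[OF r(1)]) auto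
    have "\<rho> (n+1) = n+1" "\<rho> (n+2) = n+2" using permutes_not_in[OF r(1)] by auto
    then show "\<sigma> \<in> {\<sigma>. \<sigma> permutes ?N \<and> \<sigma> (n+1) = u \<and> \<sigma> (n+2) = v}"
      using r(2) t1 t2 permutes_compose[OF rN pt] by simp
  qed
  have inj: "inj_on (\<lambda>\<rho>. \<tau> \<circ> \<rho>) {\<rho>. \<rho> permutes {1..n}}"
  proof (rule inj_onI)
    fix \<rho>1 \<rho>2 assume "\<tau> \<circ> \<rho>1 = \<tau> \<circ> \<rho>2"
    then show "\<rho>1 = \<rho>2" using injt by (metis fun.inj_map inj_eq)
  qed
  show ?thesis unfolding eq card_image[OF inj]
    by (rule card_permutations) auto
qed

definition Pairs :: "nat \<Rightarrow> (nat \<Rightarrow> nat \<Rightarrow> bool) \<Rightarrow> (nat \<times> nat) set" where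
  "Pairs N \<phi> = {(u,v). u \<in> {1..N} \<and> v \<in> {1..N} \<and> u \<noteq> v \<and> \<phi> u v}"

lemma card_perm_pairs:
  "card {\<sigma>. \<sigma> permutes {1..n+2} \<and> \<phi> (\<sigma> (n+1)) (\<sigma> (n+2))} = fact n * card (Pairs (n+2) \<phi>)"
proof -
  let ?N = "{1..n+2}"
  let ?F = "\<lambda>p. {\<sigma>. \<sigma> permutes ?N \<and> \<sigma> (n+1) = fst p \<and> \<sigma> (n+2) = snd p}"
  have finP: "finite (Pairs (n+2) \<phi>)"
    by (rule finite_subset[of _ "?N \<times> ?N"]) (auto simp: Pairs_def)
  have eq: "{\<sigma>. \<sigma> permutes ?N \<and> \<phi> (\<sigma> (n+1)) (\<sigma> (n+2))} = (\<Union>p\<in>Pairs (n+2) \<phi>. ?F p)"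
  proof (intro equalityI subsetI)
    fix \<sigma> assume "\<sigma> \<in> {\<sigma>. \<sigma> permutes ?N \<and> \<phi> (\<sigma> (n+1)) (\<sigma> (n+2))}"
    then have s: "\<sigma> permutes ?N" "\<phi> (\<sigma> (n+1)) (\<sigma> (n+2))" by auto
    have "\<sigma> (n+1) \<in> ?N" "\<sigma> (n+2) \<in> ?N" by (rule perm_in[OF s(1)], simp)+
    moreover have "\<sigma> (n+1) \<noteq> \<sigma> (n+2)" using inj_eq[OF permutes_inj[OF s(1)], of "n+1" "n+2"] by simp
    ultimately have "(\<sigma> (n+1), \<sigma> (n+2)) \<in> Pairs (n+2) \<phi>" using s(2) by (simp add: Pairs_def)
    then show "\<sigma> \<in> (\<Union>p\<in>Pairs (n+2) \<phi>. ?F p)" using s(1) by force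
  qed (auto simp: Pairs_def)
  have "card (\<Union>p\<in>Pairs (n+2) \<phi>. ?F p) = (\<Sum>p\<in>Pairs (n+2) \<phi>. card (?F p))"
  proof (rule card_UN_disjoint[OF finP])
    show "\<forall>p\<in>Pairs (n+2) \<phi>. finite (?F p)"
    proof
      fix p
      have "?F p \<subseteq> {\<sigma>. \<sigma> permutes ?N}" by blast
      then show "finite (?F p)" by (rule finite_subset) (rule finite_permutations, simp)
    qed
  qed auto
  also have "\<dots> = (\<Sum>p\<in>Pairs (n+2) \<phi>. fact n)"
  proof (rule sum.cong)
    fix p assume p: "p \<in> Pairs (n+2) \<phi>"
    obtain u v where "p = (u,v)" by fastforce
    then have "u \<in> ?N" "v \<in> ?N" "u \<noteq> v" using p by (auto simp: Pairs_def)
    then show "card (?F p) = fact n" using card_perm_fiber[of u n v] \<open>p = (u,v)\<close> by simp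
  qed simp
  finally show ?thesis unfolding eq by simp
qed

lemma perm_count_le:
  assumes perm: "\<sigma> permutes {1..n+2}"
  shows "card {i\<in>{1..n}. \<sigma> i \<le> \<sigma> (n+2)} = \<sigma> (n+2) - 1 - (if \<sigma> (n+1) < \<sigma> (n+2) then 1 else 0)"
    and "card {i\<in>{1..n}. \<sigma> i \<le> \<sigma> (n+1)} = \<sigma> (n+1) - 1 - (if \<sigma> (n+2) < \<sigma> (n+1) then 1 else 0)"
proof -
  have ne: "\<sigma> (n+1) \<noteq> \<sigma> (n+2)" using inj_eq[OF permutes_inj[OF perm], of "n+1" "n+2"] by simp
  have ins: "card {i\<in>insert a A. P i} = card {i\<in>A. P i} + (if P a then 1 else 0)"
    if "finite A" "a \<notin> A" for a A and P :: "nat \<Rightarrow> bool"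
  proof (cases "P a")
    case True
    then have "{i\<in>insert a A. P i} = insert a {i\<in>A. P i}" by auto
    then show ?thesis using that True by simp
  next
    case False
    then have "{i\<in>insert a A. P i} = {i\<in>A. P i}" by auto
    then show ?thesis using False by simp
  qed
  have c: "card {i\<in>{1..n+2}. P i} = card {i\<in>{1..n}. P i} + (if P (n+1) then 1 else 0) + (if P (n+2) then 1 else 0)" for P
  proof -
    have "{1..n+2} = insert (n+2) (insert (n+1) {1..n})" by auto
    then show ?thesis using ins[of "insert (n+1) {1..n}" "n+2" P] ins[of "{1..n}" "n+1" P] by simp
  qed
  have "\<sigma> (n+2) = card {i\<in>{1..n}. \<sigma> i \<le> \<sigma> (n+2)} + (if \<sigma> (n+1) \<le> \<sigma> (n+2) then 1 else 0) + 1"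
    using card_perm_le[OF perm, of "n+2"] c[of "\<lambda>i. \<sigma> i \<le> \<sigma> (n+2)"] by simp
  then show "card {i\<in>{1..n}. \<sigma> i \<le> \<sigma> (n+2)} = \<sigma> (n+2) - 1 - (if \<sigma> (n+1) < \<sigma> (n+2) then 1 else 0)"
    using ne by (auto split: if_splits)
  have "\<sigma> (n+1) = card {i\<in>{1..n}. \<sigma> i \<le> \<sigma> (n+1)} + 1 + (if \<sigma> (n+2) \<le> \<sigma> (n+1) then 1 else 0)"
    using card_perm_le[OF perm, of "n+1"] c[of "\<lambda>i. \<sigma> i \<le> \<sigma> (n+1)"] by simp
  then show "card {i\<in>{1..n}. \<sigma> i \<le> \<sigma> (n+1)} = \<sigma> (n+1) - 1 - (if \<sigma> (n+2) < \<sigma> (n+1) then 1 else 0)"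
    using ne by (auto split: if_splits)
qed



lemma os_cong:
  assumes "finite T" "\<And>i. i \<in> T \<Longrightarrow> x i = y i"
  shows "os j T x = os j T y"
proof -
  have "map x (sorted_list_of_set T) = map y (sorted_list_of_set T)"
    by (rule map_cong) (use assms in auto)
  then show ?thesis unfolding os_def by metis
qed

lemma ostat_cong:
  assumes "\<And>i. i \<in> {1..n} \<Longrightarrow> x i = y i"
  shows "ostat n x b = ostat n y b"
  unfolding ostat_def using os_cong[of "{1..n}" x y b] assms by simp

lemma ostat_meas':
  assumes "b \<le> n + 1" "n \<le> m"
  shows "(\<lambda>x. ostat n x b) \<in> borel_measurable (cube m)"
proof (cases "b = 0 \<or> b = n + 1")
  case True then show ?thesis unfolding ostat_def by auto
next
  case False
  then have "(\<lambda>x. ostat n x b) = os b {1..n}" unfolding ostat_def by auto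
  moreover have "os b {1..n} \<in> borel_measurable (cube m)" by (rule os_meas) (use False assms in auto)
  ultimately show ?thesis by simp
qed

lemma M0_sets: "A \<subseteq> {0..1} \<Longrightarrow> A \<in> sets borel \<Longrightarrow> A \<in> sets M0"
  by (subst sets_restrict_space_iff) auto

lemma M0_emeasure: "A \<subseteq> {0..1} \<Longrightarrow> emeasure M0 A = emeasure lborel A"
  by (rule emeasure_restrict_space) auto

lemma M0_ostat:
  assumes x: "\<And>i. i \<in> {1..n} \<Longrightarrow> x i \<in> {0..1}" and b: "b \<le> n + 1"
  shows "{y\<in>{0..1}. card {i\<in>{1..n}. x i \<le> y} < b} \<in> sets M0 \<and>
         emeasure M0 {y\<in>{0..1}. card {i\<in>{1..n}. x i \<le> y} < b} = ennreal (ostat n x b)"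
proof -
  let ?S = "{y\<in>{0..1}. card {i\<in>{1..n}. x i \<le> y} < b}"
  show ?thesis
  proof (cases "b = 0")
    case True
    then have "?S = {}" by simp
    then show ?thesis using True by (simp add: ostat_def)
  next
    case b0: False
    show ?thesis
    proof (cases "b = n + 1")
      case True
      have "card {i\<in>{1..n}. x i \<le> y} \<le> n" for y
      proof -
        have sub: "{i\<in>{1..n}. x i \<le> y} \<subseteq> {1..n}" by auto
        have "card {i\<in>{1..n}. x i \<le> y} \<le> card {1..n}" by (rule card_mono[OF _ sub]) simp
        then show ?thesis by simp
      qed
      then have S: "?S = {0..1}" using True by (auto simp: less_Suc_eq_le)
      have "emeasure M0 {0..1} = 1" by (subst M0_emeasure) auto
      moreover have "{0..1::real} \<in> sets M0" by (rule M0_sets) auto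
      ultimately show ?thesis unfolding S using True by (simp add: ostat_def)
    next
      case False
      then have bn: "1 \<le> b" "b \<le> card {1..n}" using b0 b by auto
      have o: "ostat n x b = os b {1..n} x" using b0 False by (simp add: ostat_def)
      obtain i where i: "i \<in> {1..n}" "os b {1..n} x = x i" using os_mem[OF _ bn] by blast
      define v where "v = os b {1..n} x"
      have r: "0 \<le> v" "v \<le> 1" using x[OF i(1)] i(2) unfolding v_def by auto
      have S: "?S = {0..<v}"
      proof (intro set_eqI iffI)
        fix y assume "y \<in> ?S"
        then have "y \<in> {0..1}" "card {i\<in>{1..n}. x i \<le> y} < b" by auto
        then show "y \<in> {0..<v}" using os_threshold[OF _ bn, of y x] unfolding v_def by auto
      next
        fix y assume y: "y \<in> {0..<v}"
        then have "y < v" "0 \<le> y" "y \<le> 1" using r by auto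
        then show "y \<in> ?S" using os_threshold[OF _ bn, of y x] unfolding v_def by auto
      qed
      have "emeasure M0 {0..<v} = ennreal v" by (subst M0_emeasure) (use r in auto)
      moreover have "{0..<v} \<in> sets M0" by (rule M0_sets) (use r in auto)
      ultimately show ?thesis unfolding S o v_def[symmetric] by simp
    qed
  qed
qed

lemma space_upd:
  assumes "x \<in> space (cube m)"
  shows "x(Suc m := y) \<in> space (cube (Suc m)) \<longleftrightarrow> y \<in> {0..1}"
  using assms unfolding space_cube by (auto simp: PiE_iff extensional_def)

lemma fubini_step:
  fixes f :: "(nat \<Rightarrow> real) \<Rightarrow> ennreal"
  assumes "f \<in> borel_measurable (cube (Suc m))"
  shows "(\<integral>\<^sup>+x. f x \<partial>cube (Suc m)) = (\<integral>\<^sup>+x. (\<integral>\<^sup>+y. f (x(Suc m := y)) \<partial>M0) \<partial>cube m)"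
proof -
  have ins: "insert (Suc m) {1..m} = {1..Suc m}" by auto
  have "(\<integral>\<^sup>+x. f x \<partial>PiM (insert (Suc m) {1..m}) (\<lambda>_. M0)) =
        (\<integral>\<^sup>+x. (\<integral>\<^sup>+y. f (x(Suc m := y)) \<partial>M0) \<partial>PiM {1..m} (\<lambda>_. M0))"
  proof (rule PSF.product_nn_integral_insert)
    show "f \<in> borel_measurable (PiM (insert (Suc m) {1..m}) (\<lambda>_. M0))"
      using assms unfolding cube_def ins .
  qed simp_all
  then show ?thesis unfolding cube_def ins .
qed

definition EvAB :: "nat \<Rightarrow> nat \<Rightarrow> nat \<Rightarrow> (nat \<Rightarrow> real) set" where
  "EvAB n a b = {w\<in>space (cube (n+2)). card {i\<in>{1..n}. w i \<le> w (n+2)} < a \<and> card {i\<in>{1..n}. w i \<le> w (n+1)} < b}"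

lemma EvAB_sets: "EvAB n a b \<in> sets (cube (n+2))"
proof -
  have "Measurable.pred (cube (n+2)) (\<lambda>w. card {i\<in>{1..n}. w i \<le> w (n+2)} < a)"
    by (rule pred_card_less) (auto intro!: pred_coord_le)
  moreover have "Measurable.pred (cube (n+2)) (\<lambda>w. card {i\<in>{1..n}. w i \<le> w (n+1)} < b)"
    by (rule pred_card_less) (auto intro!: pred_coord_le)
  ultimately have "Measurable.pred (cube (n+2)) (\<lambda>w. card {i\<in>{1..n}. w i \<le> w (n+2)} < a \<and> card {i\<in>{1..n}. w i \<le> w (n+1)} < b)"
    by measurable
  then show ?thesis unfolding EvAB_def pred_def .
qed



lemma Ev_le:
  assumes perm: "\<sigma> permutes {1..N}" and x: "x \<in> Ev N \<sigma>" and il: "i \<in> {1..N}" "l \<in> {1..N}"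
  shows "x l \<le> x i \<longleftrightarrow> \<sigma> l \<le> \<sigma> i"
proof -
  have ord: "\<And>i l. i \<in> {1..N} \<Longrightarrow> l \<in> {1..N} \<Longrightarrow> \<sigma> i < \<sigma> l \<Longrightarrow> x i < x l"
    using x unfolding Ev_def by auto
  have injs: "inj_on \<sigma> {1..N}" by (rule permutes_inj_on[OF perm])
  show ?thesis
  proof (cases "i = l")
    case False
    then have "\<sigma> i \<noteq> \<sigma> l" using injs il by (metis inj_onD)
    then consider "\<sigma> i < \<sigma> l" | "\<sigma> l < \<sigma> i" by linarith
    then show ?thesis using ord[OF il] ord[OF il(2,1)] by cases auto
  qed simp
qed

definition phiAB :: "nat \<Rightarrow> nat \<Rightarrow> nat \<Rightarrow> nat \<Rightarrow> bool" where
  "phiAB a b u v = (v - 1 - (if u < v then 1 else 0) < a \<and> u - 1 - (if v < u then 1 else 0) < b)"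

lemma EvAB_count:
  "measure (cube (n+2)) (EvAB n a b) = fact n * card (Pairs (n+2) (phiAB a b)) / fact (n+2)"
proof -
  have "measure (cube (n+2)) (EvAB n a b) =
        card {\<sigma>. \<sigma> permutes {1..n+2} \<and> phiAB a b (\<sigma> (n+1)) (\<sigma> (n+2))} / fact (n+2)"
  proof (rule measure_count_card[OF EvAB_sets])
    fix \<sigma> x assume perm: "\<sigma> permutes {1..n+2}" and x: "x \<in> Ev (n+2) \<sigma>"
    have xs: "x \<in> space (cube (n+2))" using x unfolding Ev_def by blast
    have c2: "{i\<in>{1..n}. x i \<le> x (n+2)} = {i\<in>{1..n}. \<sigma> i \<le> \<sigma> (n+2)}"
      using Ev_le[OF perm x, of "n+2"] by auto
    have c1: "{i\<in>{1..n}. x i \<le> x (n+1)} = {i\<in>{1..n}. \<sigma> i \<le> \<sigma> (n+1)}"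
      using Ev_le[OF perm x, of "n+1"] by auto
    show "x \<in> EvAB n a b \<longleftrightarrow> phiAB a b (\<sigma> (n+1)) (\<sigma> (n+2))"
      unfolding EvAB_def phiAB_def using xs c1 c2 perm_count_le[OF perm] by simp
  qed
  also have "\<dots> = fact n * card (Pairs (n+2) (phiAB a b)) / fact (n+2)"
    by (simp only: card_perm_pairs[of n "phiAB a b"])
  finally show ?thesis .
qed

lemma EvAB_integral:
  assumes a: "a \<le> n + 1" and b: "b \<le> n + 1"
  shows "measure (cube (n+2)) (EvAB n a b) = (\<integral>x. ostat n x a * ostat n x b \<partial>cube n)"
proof -
  let ?E = "EvAB n a b"
  define Sb where "Sb = {x\<in>space (cube (n+1)). card {i\<in>{1..n}. x i \<le> x (n+1)} < b}"
  define Sa where "Sa x = {y\<in>{0..1}. card {i\<in>{1..n}. x i \<le> y} < a}" for x :: "nat \<Rightarrow> real"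
  define Sb' where "Sb' x = {y\<in>{0..1}. card {i\<in>{1..n}. x i \<le> y} < b}" for x :: "nat \<Rightarrow> real"
  have Sb_sets: "Sb \<in> sets (cube (n+1))"
  proof -
    have "Measurable.pred (cube (n+1)) (\<lambda>w. card {i\<in>{1..n}. w i \<le> w (n+1)} < b)"
      by (rule pred_card_less) (auto intro!: pred_coord_le)
    then show ?thesis unfolding Sb_def pred_def .
  qed
  have xin: "\<And>i. i \<in> {1..n} \<Longrightarrow> x i \<in> {0..1}" if "x \<in> space (cube m)" "n \<le> m" for x m
    using that by (auto simp: space_cube PiE_iff)
  have "emeasure (cube (n+2)) ?E = (\<integral>\<^sup>+ w. indicator ?E w \<partial>cube (Suc (n+1)))"
    using EvAB_sets by simp
  also have "\<dots> = (\<integral>\<^sup>+ x. (\<integral>\<^sup>+ y. indicator ?E (x(Suc (n+1) := y)) \<partial>M0) \<partial>cube (n+1))"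
    by (rule fubini_step) (use EvAB_sets in simp)
  also have "\<dots> = (\<integral>\<^sup>+ x. indicator Sb x * ennreal (ostat n x a) \<partial>cube (n+1))"
  proof (rule nn_integral_cong)
    fix x assume x: "x \<in> space (cube (n+1))"
    have xi: "\<And>i. i \<in> {1..n} \<Longrightarrow> x i \<in> {0..1}" using xin[OF x] by simp
    have ind: "indicator ?E (x(Suc (n+1) := y)) = indicator Sb x * (indicator (Sa x) y :: ennreal)" for y
    proof -
      have "x(Suc (n+1) := y) \<in> ?E \<longleftrightarrow> x \<in> Sb \<and> y \<in> Sa x"
      proof -
        have sp: "x(Suc (n+1) := y) \<in> space (cube (n+2)) \<longleftrightarrow> y \<in> {0..1}" using space_upd[OF x] by simp
        have e1: "{i\<in>{1..n}. (x(Suc (n+1) := y)) i \<le> (x(Suc (n+1) := y)) (n+2)} = {i\<in>{1..n}. x i \<le> y}" by auto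
        have e2: "{i\<in>{1..n}. (x(Suc (n+1) := y)) i \<le> (x(Suc (n+1) := y)) (n+1)} = {i\<in>{1..n}. x i \<le> x (n+1)}" by auto
        show ?thesis unfolding EvAB_def Sb_def Sa_def using sp e1 e2 x by auto
      qed
      then show ?thesis by (simp add: indicator_def)
    qed
    have "(\<integral>\<^sup>+ y. indicator ?E (x(Suc (n+1) := y)) \<partial>M0) = (\<integral>\<^sup>+ y. indicator Sb x * indicator (Sa x) y \<partial>M0)"
      by (simp only: ind)
    also have "\<dots> = indicator Sb x * (\<integral>\<^sup>+ y. indicator (Sa x) y \<partial>M0)"
    proof (rule nn_integral_cmult)
      have "Sa x \<in> sets M0" using M0_ostat[where n=n and x=x and b=a, OF xi a] unfolding Sa_def by blast
      then show "indicator (Sa x) \<in> borel_measurable M0" by simp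
    qed
    also have "(\<integral>\<^sup>+ y. indicator (Sa x) y \<partial>M0) = ennreal (ostat n x a)"
      using M0_ostat[where n=n and x=x and b=a, OF xi a] unfolding Sa_def by simp
    finally show "(\<integral>\<^sup>+ y. indicator ?E (x(Suc (n+1) := y)) \<partial>M0) = indicator Sb x * ennreal (ostat n x a)" .
  qed
  also have "\<dots> = (\<integral>\<^sup>+ x. (\<integral>\<^sup>+ z. indicator Sb (x(Suc n := z)) * ennreal (ostat n (x(Suc n := z)) a) \<partial>M0) \<partial>cube n)"
  proof -
    have "(\<lambda>x. ostat n x a) \<in> borel_measurable (cube (Suc n))" by (rule ostat_meas') (use a in auto)
    then have m: "(\<lambda>x. indicator Sb x * ennreal (ostat n x a)) \<in> borel_measurable (cube (Suc n))"
      using Sb_sets by simp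
    show ?thesis using fubini_step[OF m] by simp
  qed
  also have "\<dots> = (\<integral>\<^sup>+ x. ennreal (ostat n x a * ostat n x b) \<partial>cube n)"
  proof (rule nn_integral_cong)
    fix x assume x: "x \<in> space (cube n)"
    have xi: "\<And>i. i \<in> {1..n} \<Longrightarrow> x i \<in> {0..1}" using xin[OF x] by simp
    have o: "ostat n (x(Suc n := z)) a = ostat n x a" for z by (rule ostat_cong) auto
    have ind: "indicator Sb (x(Suc n := z)) = (indicator (Sb' x) z :: ennreal)" for z
    proof -
      have sp: "x(Suc n := z) \<in> space (cube (n+1)) \<longleftrightarrow> z \<in> {0..1}" using space_upd[OF x] by simp
      have e: "{i\<in>{1..n}. (x(Suc n := z)) i \<le> (x(Suc n := z)) (n+1)} = {i\<in>{1..n}. x i \<le> z}" by auto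
      have "x(Suc n := z) \<in> Sb \<longleftrightarrow> z \<in> Sb' x" unfolding Sb_def Sb'_def using sp e by auto
      then show ?thesis by (simp add: indicator_def)
    qed
    have m: "Sb' x \<in> sets M0" "emeasure M0 (Sb' x) = ennreal (ostat n x b)"
      using M0_ostat[where n=n and x=x and b=b, OF xi b] unfolding Sb'_def by auto
    have r: "0 \<le> ostat n x a" "0 \<le> ostat n x b" using ostat_range[OF x a] ostat_range[OF x b] by simp_all
    have "(\<integral>\<^sup>+ z. indicator Sb (x(Suc n := z)) * ennreal (ostat n (x(Suc n := z)) a) \<partial>M0)
          = (\<integral>\<^sup>+ z. ennreal (ostat n x a) * indicator (Sb' x) z \<partial>M0)"
      by (rule nn_integral_cong) (simp add: ind o mult.commute)
    also have "\<dots> = ennreal (ostat n x a) * emeasure M0 (Sb' x)"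
      using m(1) by (simp add: nn_integral_cmult)
    also have "\<dots> = ennreal (ostat n x a * ostat n x b)"
      using m(2) ennreal_mult[OF r] by simp
    finally show "(\<integral>\<^sup>+ z. indicator Sb (x(Suc n := z)) * ennreal (ostat n (x(Suc n := z)) a) \<partial>M0)
          = ennreal (ostat n x a * ostat n x b)" .
  qed
  finally have em: "emeasure (cube (n+2)) ?E = (\<integral>\<^sup>+ x. ennreal (ostat n x a * ostat n x b) \<partial>cube n)" .
  have meas: "(\<lambda>x. ostat n x a * ostat n x b) \<in> borel_measurable (cube n)"
    using ostat_meas[OF a] ostat_meas[OF b] by measurable
  have nn: "AE x in cube n. 0 \<le> ostat n x a * ostat n x b"
    using ostat_range[of _ n a] ostat_range[of _ n b] a b by (auto intro!: AE_I2)
  have "(\<integral>x. ostat n x a * ostat n x b \<partial>cube n) = enn2real (\<integral>\<^sup>+ x. ennreal (ostat n x a * ostat n x b) \<partial>cube n)"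
    by (rule integral_eq_nn_integral[OF meas nn])
  then show ?thesis unfolding measure_def em by simp
qed



definition psiAK :: "nat \<Rightarrow> nat \<Rightarrow> nat \<Rightarrow> nat \<Rightarrow> bool" where
  "psiAK a k u v = (v - 1 - (if u < v then 1 else 0) < a \<and> u - 1 - (if v < u then 1 else 0) = k)"

lemma Pairs_finite: "finite (Pairs N \<phi>)"
  by (rule finite_subset[of _ "{1..N} \<times> {1..N}"]) (auto simp: Pairs_def)

lemma Cnt_Suc:
  "card (Pairs N (phiAB a (Suc b))) = card (Pairs N (phiAB a b)) + card (Pairs N (psiAK a b))"
proof -
  have "Pairs N (phiAB a (Suc b)) = Pairs N (phiAB a b) \<union> Pairs N (psiAK a b)"
    unfolding Pairs_def phiAB_def psiAK_def by auto
  moreover have "Pairs N (phiAB a b) \<inter> Pairs N (psiAK a b) = {}"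
    unfolding Pairs_def phiAB_def psiAK_def by auto
  ultimately show ?thesis by (simp add: card_Un_disjoint Pairs_finite)
qed

lemma T_card:
  assumes a: "1 \<le> a" "a \<le> n" and k: "k \<le> n"
  shows "card (Pairs (n+2) (psiAK a k)) = a + (if k < a then 1 else 0)"
proof -
  have eq: "Pairs (n+2) (psiAK a k) = ({k+2} \<times> {1..min a (k+1)}) \<union> ({k+1} \<times> {k+2..a+1})"
  proof (intro set_eqI)
    fix p :: "nat \<times> nat"
    obtain u v where p: "p = (u,v)" by fastforce
    have "(u,v) \<in> Pairs (n+2) (psiAK a k) \<longleftrightarrow> (u,v) \<in> ({k+2} \<times> {1..min a (k+1)}) \<union> ({k+1} \<times> {k+2..a+1})"
    proof (cases "u < v")
      case True
      then show ?thesis unfolding Pairs_def psiAK_def using a k by auto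
    next
      case False
      then show ?thesis unfolding Pairs_def psiAK_def using a k by auto
    qed
    then show "p \<in> Pairs (n+2) (psiAK a k) \<longleftrightarrow> p \<in> ({k+2} \<times> {1..min a (k+1)}) \<union> ({k+1} \<times> {k+2..a+1})"
      using p by simp
  qed
  have "card (({k+2} \<times> {1..min a (k+1)}) \<union> ({k+1} \<times> {k+2..a+1})) = min a (k+1) + (a + 1 + 1 - (k+2))"
    by (subst card_Un_disjoint) (auto simp: card_cartesian_product)
  then show ?thesis unfolding eq by auto
qed

lemma Cnt_diff2:
  assumes a: "1 \<le> a" "a \<le> n" and k: "1 \<le> k" "k \<le> n"
  shows "real (card (Pairs (n+2) (phiAB a (k+1)))) - 2 * real (card (Pairs (n+2) (phiAB a k)))
         + real (card (Pairs (n+2) (phiAB a (k-1)))) = - (if a = k then 1 else 0)"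
proof -
  obtain k' where k': "k = Suc k'" using k by (cases k) auto
  have c1: "card (Pairs (n+2) (phiAB a (k+1))) = card (Pairs (n+2) (phiAB a k)) + (a + (if k < a then 1 else 0))"
    using Cnt_Suc[of "n+2" a k] T_card[OF a k(2)] by simp
  have c2: "card (Pairs (n+2) (phiAB a k)) = card (Pairs (n+2) (phiAB a (k-1))) + (a + (if k' < a then 1 else 0))"
    using Cnt_Suc[of "n+2" a k'] T_card[OF a, of k'] k k' by simp
  show ?thesis using c1 c2 k' by (auto split: if_splits)
qed

lemma integrable_ostat2:
  assumes "a \<le> n + 1" "b \<le> n + 1"
  shows "integrable (cube n) (\<lambda>x. ostat n x a * ostat n x b)"
proof -
  interpret P: prob_space "cube n" by (rule prob_cube)
  show ?thesis
  proof (rule P.integrable_const_bound[where B=1])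
    show "AE x in cube n. norm (ostat n x a * ostat n x b) \<le> 1"
    proof (rule AE_I2)
      fix x assume x: "x \<in> space (cube n)"
      have "0 \<le> ostat n x a" "ostat n x a \<le> 1" "0 \<le> ostat n x b" "ostat n x b \<le> 1"
        using ostat_range[OF x assms(1)] ostat_range[OF x assms(2)] by auto
      then show "norm (ostat n x a * ostat n x b) \<le> 1" by (simp add: abs_mult mult_le_one)
    qed
    show "(\<lambda>x. ostat n x a * ostat n x b) \<in> borel_measurable (cube n)"
      using ostat_meas[OF assms(1)] ostat_meas[OF assms(2)] by measurable
  qed
qed

lemma stepB:
  assumes a: "1 \<le> a" "a \<le> n" and k: "1 \<le> k" "k \<le> n"
  shows "(\<integral>x. ostat n x a * (ostat n x (k+1) - 2 * ostat n x k + ostat n x (k-1)) \<partial>cube n)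
         = - (if a = k then 1 else 0) / ((n+1) * (n+2))"
proof -
  have an: "a \<le> n + 1" using a by simp
  have I: "(\<integral>x. ostat n x a * ostat n x b \<partial>cube n) = fact n * card (Pairs (n+2) (phiAB a b)) / fact (n+2)"
    if "b \<le> n + 1" for b
    using EvAB_integral[OF an that] EvAB_count[of n a b] by simp
  have "(\<integral>x. ostat n x a * (ostat n x (k+1) - 2 * ostat n x k + ostat n x (k-1)) \<partial>cube n)
      = (\<integral>x. ostat n x a * ostat n x (k+1) - 2 * (ostat n x a * ostat n x k) + ostat n x a * ostat n x (k-1) \<partial>cube n)"
    by (simp add: algebra_simps)
  also have "\<dots> = (\<integral>x. ostat n x a * ostat n x (k+1) \<partial>cube n) - 2 * (\<integral>x. ostat n x a * ostat n x k \<partial>cube n)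
                 + (\<integral>x. ostat n x a * ostat n x (k-1) \<partial>cube n)"
    using integrable_ostat2[OF an, of "k+1"] integrable_ostat2[OF an, of k] integrable_ostat2[OF an, of "k-1"] k
    by simp
  also have "\<dots> = fact n * (real (card (Pairs (n+2) (phiAB a (k+1)))) - 2 * real (card (Pairs (n+2) (phiAB a k)))
         + real (card (Pairs (n+2) (phiAB a (k-1))))) / fact (n+2)"
  proof -
    have i1: "(\<integral>x. ostat n x a * ostat n x (k+1) \<partial>cube n) = fact n * card (Pairs (n+2) (phiAB a (k+1))) / fact (n+2)"
      by (rule I) (use k in simp)
    have i2: "(\<integral>x. ostat n x a * ostat n x k \<partial>cube n) = fact n * card (Pairs (n+2) (phiAB a k)) / fact (n+2)"
      by (rule I) (use k in simp)
    have i3: "(\<integral>x. ostat n x a * ostat n x (k-1) \<partial>cube n) = fact n * card (Pairs (n+2) (phiAB a (k-1))) / fact (n+2)"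
      by (rule I) (use k in simp)
    show ?thesis unfolding i1 i2 i3 by (simp add: diff_divide_distrib add_divide_distrib right_diff_distrib distrib_left)
  qed
  also have "\<dots> = fact n * (- (if a = k then 1 else 0)) / fact (n+2)"
    using Cnt_diff2[OF a k] by simp
  also have "fact (n+2) = (real n + 1) * (real n + 2) * (fact n :: real)"
    by (simp add: fact_Suc algebra_simps)
  finally have fin: "(\<integral>x. ostat n x a * (ostat n x (k+1) - 2 * ostat n x k + ostat n x (k-1)) \<partial>cube n)
      = fact n * (- (if a = k then 1 else 0)) / ((real n + 1) * (real n + 2) * fact n)" .
  have fp: "(fact n :: real) > 0" by simp
  have "fact n * (- (if a = k then 1 else 0)) / ((real n + 1) * (real n + 2) * fact n)
        = ((- (if a = k then 1 else 0)) * fact n) / (((real n + 1) * (real n + 2)) * fact n)"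
    by (simp only: mult.commute)
  also have "\<dots> = (- (if a = k then 1 else 0)) / ((real n + 1) * (real n + 2))"
    by (rule nonzero_mult_divide_mult_cancel_right) (use fp in simp)
  finally show ?thesis unfolding fin by (simp add: add.commute)
qed



lemma os_reidx:
  assumes perm: "\<pi> permutes {1..n}" and T: "T \<subseteq> {1..n}" and j: "1 \<le> j" "j \<le> card T"
  shows "os j T (reidx n \<pi> x) = os j (\<pi> ` T) x"
proof -
  have finT: "finite T" using T finite_subset by blast
  have injT: "inj_on \<pi> T" using permutes_inj_on[OF perm] .
  have cT: "card (\<pi> ` T) = card T" by (rule card_image[OF injT])
  have finT': "finite (\<pi> ` T)" using finT by simp
  have cnt: "card {i\<in>T. reidx n \<pi> x i \<le> z} = card {l\<in>\<pi> ` T. x l \<le> z}" for z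
  proof -
    have e1: "{i\<in>T. reidx n \<pi> x i \<le> z} = {i\<in>T. x (\<pi> i) \<le> z}"
    proof (intro Collect_cong conj_cong refl)
      fix i assume "i \<in> T"
      then have "i \<in> {1..n}" using T by blast
      then show "(reidx n \<pi> x i \<le> z) = (x (\<pi> i) \<le> z)" by (simp add: reidx_def)
    qed
    have e2: "\<pi> ` {i\<in>T. x (\<pi> i) \<le> z} = {l\<in>\<pi> ` T. x l \<le> z}" by blast
    have "inj_on \<pi> {i\<in>T. x (\<pi> i) \<le> z}" using injT by (rule inj_on_subset) blast
    then have "card (\<pi> ` {i\<in>T. x (\<pi> i) \<le> z}) = card {i\<in>T. x (\<pi> i) \<le> z}" by (rule card_image)
    then show ?thesis unfolding e1 e2[symmetric] by simp
  qed
  show ?thesis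
  proof (rule os_eqI[OF finT j])
    fix z
    show "z < os j (\<pi> ` T) x \<longleftrightarrow> card {i\<in>T. reidx n \<pi> x i \<le> z} < j"
    proof -
      have "z < os j (\<pi> ` T) x \<longleftrightarrow> card {l\<in>\<pi> ` T. x l \<le> z} < j"
        by (rule os_threshold[OF finT' j(1)]) (use j(2) cT in simp)
      then show ?thesis unfolding cnt .
    qed
  qed
qed

lemma ostat_reidx:
  assumes perm: "\<pi> permutes {1..n}" and b: "b \<le> n + 1"
  shows "ostat n (reidx n \<pi> x) b = ostat n x b"
proof (cases "b = 0 \<or> b = n + 1")
  case True then show ?thesis by (auto simp: ostat_def)
next
  case False
  then have "os b {1..n} (reidx n \<pi> x) = os b (\<pi> ` {1..n}) x" using b by (intro os_reidx[OF perm]) auto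
  also have "\<pi> ` {1..n} = {1..n}" by (rule permutes_image[OF perm])
  finally show ?thesis using False by (simp add: ostat_def)
qed

lemma perm_exists:
  fixes n :: nat
  assumes S: "S \<subseteq> {1..n}" and T: "T \<subseteq> {1..n}" and c: "card S = card T"
  shows "\<exists>\<pi>. \<pi> permutes {1..n} \<and> \<pi> ` S = T"
proof -
  have finS: "finite S" by (rule finite_subset[OF S]) simp
  have finT: "finite T" by (rule finite_subset[OF T]) simp
  obtain f where f: "bij_betw f S T" using finite_same_card_bij[OF finS finT c] by blast
  have c2: "card ({1..n} - S) = card ({1..n} - T)"
    using card_Diff_subset[OF finS S] card_Diff_subset[OF finT T] c by simp
  have fin2: "finite ({1..n} - S)" "finite ({1..n} - T)" by simp_all
  obtain g where g: "bij_betw g ({1..n} - S) ({1..n} - T)" using finite_same_card_bij[OF fin2 c2] by blast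
  define \<pi> where "\<pi> x = (if x \<in> S then f x else if x \<in> {1..n} then g x else x)" for x
  have "bij_betw \<pi> S T \<longleftrightarrow> bij_betw f S T" by (rule bij_betw_cong) (simp add: \<pi>_def)
  then have b1: "bij_betw \<pi> S T" using f by simp
  have "bij_betw \<pi> ({1..n} - S) ({1..n} - T) \<longleftrightarrow> bij_betw g ({1..n} - S) ({1..n} - T)"
    by (rule bij_betw_cong) (simp add: \<pi>_def)
  then have b2: "bij_betw \<pi> ({1..n} - S) ({1..n} - T)" using g by simp
  have "bij_betw \<pi> (S \<union> ({1..n} - S)) (T \<union> ({1..n} - T))" by (rule bij_betw_combine[OF b1 b2]) blast
  moreover have "S \<union> ({1..n} - S) = {1..n}" using S by blast
  moreover have "T \<union> ({1..n} - T) = {1..n}" using T by blast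
  ultimately have bb: "bij_betw \<pi> {1..n} {1..n}" by simp
  have "\<pi> x = x" if "x \<notin> {1..n}" for x
  proof -
    have "x \<notin> S" using that S by blast
    then show ?thesis unfolding \<pi>_def using that by (simp only: if_False)
  qed
  then have "\<pi> permutes {1..n}" by (intro bij_imp_permutes[OF bb]) blast
  moreover have "\<pi> ` S = T" using b1 by (simp add: bij_betw_def)
  ultimately show ?thesis by blast
qed

definition Dk :: "nat \<Rightarrow> nat \<Rightarrow> (nat \<Rightarrow> real) \<Rightarrow> real" where
  "Dk n k x = ostat n x (k+1) - 2 * ostat n x k + ostat n x (k-1)"

lemma Dk_meas: "1 \<le> k \<Longrightarrow> k \<le> n \<Longrightarrow> Dk n k \<in> borel_measurable (cube n)"
  unfolding Dk_def using ostat_meas[of "k+1" n] ostat_meas[of k n] ostat_meas[of "k-1" n]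
  by (intro borel_measurable_add borel_measurable_diff borel_measurable_times borel_measurable_const) auto

lemma Dk_bound:
  assumes x: "x \<in> space (cube n)" and k: "1 \<le> k" "k \<le> n"
  shows "\<bar>Dk n k x\<bar> \<le> 4"
proof -
  have "0 \<le> ostat n x (k+1) \<and> ostat n x (k+1) \<le> 1" by (rule ostat_range[OF x]) (use k in simp)
  moreover have "0 \<le> ostat n x k \<and> ostat n x k \<le> 1" by (rule ostat_range[OF x]) (use k in simp)
  moreover have "0 \<le> ostat n x (k-1) \<and> ostat n x (k-1) \<le> 1" by (rule ostat_range[OF x]) (use k in simp)
  ultimately show ?thesis unfolding Dk_def abs_le_iff by linarith
qed

lemma F_integrable:
  assumes T: "T \<subseteq> {1..n}" "1 \<le> j" "j \<le> card T" and k: "1 \<le> k" "k \<le> n"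
  shows "integrable (cube n) (\<lambda>x. os j T x * Dk n k x)"
proof -
  interpret P: prob_space "cube n" by (rule prob_cube)
  show ?thesis
  proof (rule P.integrable_const_bound[where B=4])
    show "AE x in cube n. norm (os j T x * Dk n k x) \<le> 4"
    proof (rule AE_I2)
      fix x assume x: "x \<in> space (cube n)"
      have "0 \<le> os j T x" "os j T x \<le> 1" using os_range[OF x T] by auto
      moreover have "\<bar>Dk n k x\<bar> \<le> 4" by (rule Dk_bound[OF x k])
      ultimately have "os j T x * \<bar>Dk n k x\<bar> \<le> 1 * 4"
        by (intro mult_mono) auto
      moreover have "norm (os j T x * Dk n k x) = os j T x * \<bar>Dk n k x\<bar>"
        using \<open>0 \<le> os j T x\<close> by (simp add: abs_mult)
      ultimately show "norm (os j T x * Dk n k x) \<le> 4" by simp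
    qed
    show "(\<lambda>x. os j T x * Dk n k x) \<in> borel_measurable (cube n)"
      using os_meas[OF T] Dk_meas[OF k] by measurable
  qed
qed

lemma F_invariant:
  assumes S: "S \<subseteq> {1..n}" and T: "T \<subseteq> {1..n}" and c: "card T = card S"
    and j: "1 \<le> j" "j \<le> card S" and k: "1 \<le> k" "k \<le> n"
  shows "(\<integral>x. os j T x * Dk n k x \<partial>cube n) = (\<integral>x. os j S x * Dk n k x \<partial>cube n)"
proof -
  obtain \<pi> where perm: "\<pi> permutes {1..n}" and img: "\<pi> ` S = T" using perm_exists[OF S T c[symmetric]] by blast
  have meas: "(\<lambda>x. os j S x * Dk n k x) \<in> borel_measurable (cube n)"
    using os_meas[OF S j] Dk_meas[OF k] by measurable
  have "(\<integral>x. os j S x * Dk n k x \<partial>cube n) = (\<integral>x. os j S (reidx n \<pi> x) * Dk n k (reidx n \<pi> x) \<partial>cube n)"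
    by (rule integral_reidx[OF perm meas])
  also have "\<dots> = (\<integral>x. os j T x * Dk n k x \<partial>cube n)"
  proof (rule Bochner_Integration.integral_cong[OF refl])
    fix x
    have "os j S (reidx n \<pi> x) = os j T x" using os_reidx[OF perm S j] img by simp
    moreover have "Dk n k (reidx n \<pi> x) = Dk n k x"
      unfolding Dk_def using k by (simp add: ostat_reidx[OF perm])
    ultimately show "os j S (reidx n \<pi> x) * Dk n k (reidx n \<pi> x) = os j T x * Dk n k x" by simp
  qed
  finally show ?thesis by simp
qed



lemma os_ostat: "1 \<le> a \<Longrightarrow> a \<le> n \<Longrightarrow> os a {1..n} x = ostat n x a"
  by (simp add: ostat_def)

theorem proposition21:
  fixes n j k :: nat and S :: "nat set"
  assumes "n \<ge> 1" and "S \<subseteq> {1..n}" and "S \<noteq> {}"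
    and "1 \<le> j" and "j \<le> card S" and "1 \<le> k" and "k \<le> n"
  shows "influence n (os j S) k =
    (if j \<le> k \<and> k - j \<le> n - card S
     then real ((k - 1) choose (j - 1)) * real ((n - k) choose (card S - j)) / real (n choose card S)
     else 0)"
proof -
  note Sn = assms(2) and j = assms(4,5) and k = assms(6,7)
  define s where "s = card S"
  define P where "P = {T. T \<subseteq> {1..n} \<and> card T = s}"
  define c where "c a = real (((a-1) choose (j-1)) * ((n-a) choose (s-j)))" for a
  define F where "F T = (\<integral>x. os j T x * Dk n k x \<partial>cube n)" for T
  have sn: "s \<le> n" unfolding s_def using card_mono[OF _ Sn] by simp
  have finP: "finite P" unfolding P_def by (rule finite_subset[of _ "Pow {1..n}"]) auto
  have cardP: "card P = n choose s" unfolding P_def using n_subsets[of "{1..n}" s] by simp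
  have intT: "integrable (cube n) (\<lambda>x. os j T x * Dk n k x)" if "T \<in> P" for T
    using that j by (intro F_integrable[OF _ _ _ k]) (auto simp: P_def s_def)
  have inta: "integrable (cube n) (\<lambda>x. c a * (os a {1..n} x * Dk n k x))" if "a \<in> {1..n}" for a
    using that by (intro Bochner_Integration.integrable_mult_right F_integrable[OF _ _ _ k]) auto
  have FT: "F T = F S" if "T \<in> P" for T
    unfolding F_def using that j by (intro F_invariant[OF Sn _ _ _ _ k]) (auto simp: P_def s_def)
  have "(\<Sum>T\<in>P. F T) = real (n choose s) * F S"
    using FT cardP by simp
  moreover have "(\<Sum>T\<in>P. F T) = (\<integral>x. (\<Sum>T\<in>P. os j T x * Dk n k x) \<partial>cube n)"
    unfolding F_def by (rule Bochner_Integration.integral_sum[symmetric]) (rule intT)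
  moreover have "\<dots> = (\<integral>x. (\<Sum>a\<in>{1..n}. c a * (os a {1..n} x * Dk n k x)) \<partial>cube n)"
  proof (rule integral_cong_AE)
    show "(\<lambda>x. \<Sum>T\<in>P. os j T x * Dk n k x) \<in> borel_measurable (cube n)"
      by (rule borel_measurable_integrable, rule Bochner_Integration.integrable_sum, rule intT)
    show "(\<lambda>x. \<Sum>a\<in>{1..n}. c a * (os a {1..n} x * Dk n k x)) \<in> borel_measurable (cube n)"
      by (rule borel_measurable_integrable, rule Bochner_Integration.integrable_sum, rule inta)
    show "AE x in cube n. (\<Sum>T\<in>P. os j T x * Dk n k x) = (\<Sum>a\<in>{1..n}. c a * (os a {1..n} x * Dk n k x))"
      using AE_inj[of n]
    proof (rule AE_mp, intro AE_I2 impI)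
      fix x :: "nat \<Rightarrow> real" assume "x \<in> space (cube n)" and inj: "inj_on x {1..n}"
      have "(\<Sum>T\<in>P. os j T x * Dk n k x) = (\<Sum>T\<in>P. os j T x) * Dk n k x"
        by (simp add: sum_distrib_right)
      also have "(\<Sum>T\<in>P. os j T x) = (\<Sum>a\<in>{1..n}. c a * os a {1..n} x)"
        unfolding P_def c_def s_def by (rule sum_os_identity[OF inj j]) (use sn s_def in simp)
      also have "(\<Sum>a\<in>{1..n}. c a * os a {1..n} x) * Dk n k x = (\<Sum>a\<in>{1..n}. c a * (os a {1..n} x * Dk n k x))"
        by (simp add: sum_distrib_right mult.assoc)
      finally show "(\<Sum>T\<in>P. os j T x * Dk n k x) = (\<Sum>a\<in>{1..n}. c a * (os a {1..n} x * Dk n k x))" .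
    qed
  qed
  moreover have "\<dots> = (\<Sum>a\<in>{1..n}. c a * (\<integral>x. os a {1..n} x * Dk n k x \<partial>cube n))"
  proof -
    have "(\<integral>x. (\<Sum>a\<in>{1..n}. c a * (os a {1..n} x * Dk n k x)) \<partial>cube n)
          = (\<Sum>a\<in>{1..n}. (\<integral>x. c a * (os a {1..n} x * Dk n k x) \<partial>cube n))"
      by (rule Bochner_Integration.integral_sum) (rule inta)
    then show ?thesis by simp
  qed
  moreover have "\<dots> = (\<Sum>a\<in>{1..n}. c a * (- (if a = k then 1 else 0) / ((real n + 1) * (real n + 2))))"
  proof (rule sum.cong[OF refl])
    fix a assume a: "a \<in> {1..n}"
    have "(\<integral>x. os a {1..n} x * Dk n k x \<partial>cube n) = (\<integral>x. ostat n x a * (ostat n x (k+1) - 2 * ostat n x k + ostat n x (k-1)) \<partial>cube n)"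
    proof (rule Bochner_Integration.integral_cong[OF refl])
      fix x
      have "os a {1..n} x = ostat n x a" by (rule os_ostat) (use a in auto)
      then show "os a {1..n} x * Dk n k x = ostat n x a * (ostat n x (k+1) - 2 * ostat n x k + ostat n x (k-1))"
        unfolding Dk_def by simp
    qed
    also have "\<dots> = - (if a = k then 1 else 0) / ((real n + 1) * (real n + 2))"
      using stepB[of a n k] a k by simp
    finally show "c a * (\<integral>x. os a {1..n} x * Dk n k x \<partial>cube n) = c a * (- (if a = k then 1 else 0) / ((real n + 1) * (real n + 2)))"
      by simp
  qed
  moreover have "\<dots> = - c k / ((real n + 1) * (real n + 2))"
  proof -
    have "(\<Sum>a\<in>{1..n}. c a * (- (if a = k then 1 else 0) / ((real n + 1) * (real n + 2))))
        = (\<Sum>a\<in>{1..n}. (if a = k then - c k / ((real n + 1) * (real n + 2)) else 0))"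
      by (rule sum.cong) auto
    also have "\<dots> = - c k / ((real n + 1) * (real n + 2))" using k by simp
    finally show ?thesis .
  qed
  ultimately have key: "real (n choose s) * F S = - c k / ((real n + 1) * (real n + 2))" by simp
  have cpos: "real (n choose s) > 0" using sn by simp
  have infl: "influence n (os j S) k = - (real (n+1) * real (n+2)) * F S"
    unfolding influence_def F_def Dk_def by simp
  have D0: "(real n + 1) * (real n + 2) \<noteq> 0" by simp
  have C0: "real (n choose s) \<noteq> 0" using cpos by simp
  have FS: "F S = - c k / ((real n + 1) * (real n + 2)) / real (n choose s)"
  proof -
    have "F S = (real (n choose s) * F S) / real (n choose s)" using C0 by simp
    also have "\<dots> = - c k / ((real n + 1) * (real n + 2)) / real (n choose s)" unfolding key ..
    finally show ?thesis .
  qed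
  have gen: "\<And>A B c::real. A \<noteq> 0 \<Longrightarrow> B \<noteq> 0 \<Longrightarrow> - A * (- c / A / B) = c / B"
    by (simp add: field_simps)
  have AA: "real (n+1) * real (n+2) = (real n + 1) * (real n + 2)" by (simp add: add.commute)
  have res: "influence n (os j S) k = c k / real (n choose s)"
    unfolding infl FS AA by (rule gen[OF D0 C0])
  show ?thesis
  proof (cases "j \<le> k \<and> k - j \<le> n - card S")
    case True
    then show ?thesis unfolding res c_def s_def by simp
  next
    case False
    have "c k = 0"
    proof (cases "j \<le> k")
      case True
      then have "n - k < s - j" using False sn s_def j k by auto
      then show ?thesis unfolding c_def by simp
    next
      case False
      then have "k - 1 < j - 1" using k by auto
      then show ?thesis unfolding c_def by simp
    qed
    then have "c k / real (n choose s) = 0" by simp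
    then show ?thesis unfolding res if_not_P[OF False] .
  qed
qed


end
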